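(* Consider problem (P) and suppose Assumptions A and B hold. Then: (i) Algorithm SCP$_{ls}$ is well defined: every subproblem (S) arising in the algorithm has a unique solution, and there is $k_0\in\mathbb N_+$, independent of $t$, such that at every outer iteration $t\ge 0$ the inner loop (step (3)) terminates after at most $k_0$ inner iterations, producing $x^{t+1}$ with $g(x^{t+1})\le 0$. (ii) The sequence $\{(L_f^t,L_g^t)\}$ generated by SCP$_{ls}$ is bounded. (iii) For every $t\ge 0$, every trial pair $(\tilde L_f,\tilde L_g)$ used in the inner loop at iteration $t$ and every $i\in\{1,\dots,m\}$, the number $\tilde R_i:=\big\|\nabla g_i(x^t)/(\tilde L_g)_i\big\|^2-\frac{2}{(\tilde L_g)_i}g_i(x^t)$ is strictly positive. (iv) For every $t\ge0$ and every trial pair $(\tilde L_f,\tilde L_g)$ at iteration $t$, with $\tilde x$ the solution of (S), the subproblem (S) has a Lagrange multiplier $\tilde\lambda\in\mathbb R^m_+$; setting $\tilde L_{fg}:=\tilde L_f+\langle\tilde\lambda,\tilde L_g\rangle$, one has $\tilde\lambda_i\big(g_i(x^t)+\langle\nabla g_i(x^t),\tilde x-x^t\rangle+\frac{(\tilde L_g)_i}{2}\|\tilde x-x^t\|^2\big)=0$ for all $i$, and $0\in\nabla f(x^t)-\xi^t+\tilde L_{fg}(\tilde x-x^t)+\partial P_1(\tilde x)+\sum_{i=1}^m\tilde\lambda_i\nabla g_i(x^t)$. Moreover, if $g(\tilde x)\le 0$, then for every $x\in\mathbb R^n$, $F(\tilde x)\le f(x^t)+\langle\nabla f(x^t)-\xi^t,x-x^t\rangle+\frac{\tilde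 L_{fg}}{2}\|x-x^t\|^2+P_1(x)-P_2(x^t)+\sum_{i=1}^m\tilde\lambda_i\big(g_i(x^t)+\langle\nabla g_i(x^t),x-x^t\rangle\big)-\frac{\tilde L_{fg}}{2}\|x-\tilde x\|^2-\frac{\tilde L_f-L_f}{2}\|\tilde x-x^t\|^2$, where $L_f$ is the Lipschitz modulus of $\nabla f$ from Assumption A(i).
   Context: Problem (P): $\min_{x\in\mathbb R^n}F(x):=f(x)+P_1(x)-P_2(x)+\delta_{\{g\le 0\}}(x)$, where $f:\mathbb R^n\to\mathbb R$ is continuously differentiable, $P_1,P_2:\mathbb R^n\to\mathbb R$ are convex and continuous (possibly nonsmooth), $g=(g_1,\dots,g_m):\mathbb R^n\to\mathbb R^m$ is continuous with $\{x:g(x)\le0\}\neq\emptyset$ (inequalities between vectors are componentwise), and $\delta_C$ denotes the indicator function of $C$ (equal to $0$ on $C$ and $+\infty$ outside). $\partial$ denotes the (limiting) subdifferential; for convex functions it is the usual convex subdifferential. Assumption A: (i) $\nabla f$ is Lipschitz with modulus $L_f$; (ii) each $g_i$ is differentiable with $\nabla g_i$ Lipschitz with modulus $L_{g_i}$; (iii) $F$ is level-bounded. Assumption B (MFCQ): each $g_i$ is continuously differentiable and for every $x$ with $g(x)\le0$ there exists $d\in\mathbb R^n$ with $\langle\nabla g_i(x),d\rangle<0$ for all $i\in I(x):=\{j:g_j(x)=0\}$. For $x,y\in\mathbb R^n$, $w\in\mathbb R^m$, let $\bar G(x,y,w)\in\mathbb R^m$ have components $\bar G_i(x,y,w)=g_i(y)+\langle\nabla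 g_i(y),x-y\rangle+\frac{w_i}{2}\|x-y\|^2$. Algorithm SCP$_{ls}$: fix $c>0$, $0<\underline L<\bar L$, $\tau>1$ and $x^0$ with $g(x^0)\le0$. For $t=0,1,2,\dots$: (1) pick any $\xi^t\in\partial P_2(x^t)$; (2) choose $L_f^{t,0}\in[\underline L,\bar L]$ and $L_g^{t,0}\in[\underline L,\bar L]^m$ arbitrarily and set $\tilde L_f=L_f^{t,0}$, $\tilde L_g=L_g^{t,0}$; (3) compute $\tilde x$ solving the subproblem (S): minimize $\langle\nabla f(x^t)-\xi^t,x-x^t\rangle+\frac{\tilde L_f}{2}\|x-x^t\|^2+P_1(x)$ subject to $\bar G(x,x^t,\tilde L_g)\le0$. If $g(\tilde x)\le0$ and $F(\tilde x)\le F(x^t)-\frac c2\|\tilde x-x^t\|^2$, set $x^{t+1}=\tilde x$, $L_f^t=\tilde L_f$, $L_g^t=\tilde L_g$ and go to iteration $t+1$. Otherwise, if $g(\tilde x)\not\le0$ replace $\tilde L_g$ by $\tau\tilde L_g$, while if $g(\tilde x)\le0$ but the decrease inequality fails replace $\tilde L_f$ by $\tau\tilde L_f$; then repeat step (3) (these repetitions are the inner loop). The algorithm produces infinite sequences $\{x^t\},\{\xi^t\},\{L_f^t\},\{L_g^t\}$. A Lagrange multiplier of (S) is a vector $\lambda\in\mathbb R^m_+$ such that $\tilde x$ minimizes $x\mapsto\langle\nabla f(x^t)-\xi^t,x-x^t\rangle+\frac{\tilde L_f}{2}\|x-x^t\|^2+P_1(x)+\langle\lambda,\bar G(x,x^t,\tilde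 L_g)\rangle$ over $\mathbb R^n$ and $\lambda_i\bar G_i(\tilde x,x^t,\tilde L_g)=0$ for all $i$. *)

theory Defs
  imports "HOL-Analysis.Analysis"
begin

text \<open>Problem data convention: the constraint map g = (g_1,...,g_m) is given as
  g :: nat => 'a => real with components indexed by i < m; gg i x is the gradient of g i at x.
  Vectors in R^m (like L_g, lambda) are functions nat => real, only entries i < m matter.\<close>

definition subgrad :: "('a::real_inner \<Rightarrow> real) \<Rightarrow> 'a \<Rightarrow> 'a set" where
  "subgrad P x = {v. \<forall>y. P x + v \<bullet> (y - x) \<le> P y}"

definition feas :: "nat \<Rightarrow> (nat \<Rightarrow> 'a \<Rightarrow> real) \<Rightarrow> 'a \<Rightarrow> bool" where
  "feas m g x \<longleftrightarrow> (\<forall>i<m. g i x \<le> 0)"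

text \<open>Finite part of F (F = Fval + indicator of the feasible set).\<close>
definition Fval :: "('a \<Rightarrow> real) \<Rightarrow> ('a \<Rightarrow> real) \<Rightarrow> ('a \<Rightarrow> real) \<Rightarrow> 'a \<Rightarrow> real" where
  "Fval f P1 P2 x = f x + P1 x - P2 x"

definition Gbar :: "(nat \<Rightarrow> 'a::real_inner \<Rightarrow> real) \<Rightarrow> (nat \<Rightarrow> 'a \<Rightarrow> 'a) \<Rightarrow> 'a \<Rightarrow> 'a \<Rightarrow> (nat \<Rightarrow> real) \<Rightarrow> nat \<Rightarrow> real" where
  "Gbar g gg x y w i = g i y + gg i y \<bullet> (x - y) + w i / 2 * (norm (x - y))\<^sup>2"

definition sub_obj :: "('a::real_inner \<Rightarrow> 'a) \<Rightarrow> ('a \<Rightarrow> real) \<Rightarrow> 'a \<Rightarrow> 'a \<Rightarrow> real \<Rightarrow> 'a \<Rightarrow> real" where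
  "sub_obj gf P1 xt \<xi> Lf x = (gf xt - \<xi>) \<bullet> (x - xt) + Lf / 2 * (norm (x - xt))\<^sup>2 + P1 x"

definition sub_feas :: "nat \<Rightarrow> (nat \<Rightarrow> 'a::real_inner \<Rightarrow> real) \<Rightarrow> (nat \<Rightarrow> 'a \<Rightarrow> 'a) \<Rightarrow> 'a \<Rightarrow> (nat \<Rightarrow> real) \<Rightarrow> 'a \<Rightarrow> bool" where
  "sub_feas m g gg xt Lg x \<longleftrightarrow> (\<forall>i<m. Gbar g gg x xt Lg i \<le> 0)"

definition is_sub_sol :: "nat \<Rightarrow> ('a::real_inner \<Rightarrow> 'a) \<Rightarrow> (nat \<Rightarrow> 'a \<Rightarrow> real) \<Rightarrow> (nat \<Rightarrow> 'a \<Rightarrow> 'a)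
    \<Rightarrow> ('a \<Rightarrow> real) \<Rightarrow> 'a \<Rightarrow> 'a \<Rightarrow> real \<Rightarrow> (nat \<Rightarrow> real) \<Rightarrow> 'a \<Rightarrow> bool" where
  "is_sub_sol m gf g gg P1 xt \<xi> Lf Lg z \<longleftrightarrow>
     sub_feas m g gg xt Lg z \<and>
     (\<forall>x. sub_feas m g gg xt Lg x \<longrightarrow> sub_obj gf P1 xt \<xi> Lf z \<le> sub_obj gf P1 xt \<xi> Lf x)"

definition sub_sol :: "nat \<Rightarrow> ('a::real_inner \<Rightarrow> 'a) \<Rightarrow> (nat \<Rightarrow> 'a \<Rightarrow> real) \<Rightarrow> (nat \<Rightarrow> 'a \<Rightarrow> 'a)
    \<Rightarrow> ('a \<Rightarrow> real) \<Rightarrow> 'a \<Rightarrow> 'a \<Rightarrow> real \<Rightarrow> (nat \<Rightarrow> real) \<Rightarrow> 'a" where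
  "sub_sol m gf g gg P1 xt \<xi> Lf Lg = (THE z. is_sub_sol m gf g gg P1 xt \<xi> Lf Lg z)"

definition accepted :: "nat \<Rightarrow> ('a::real_inner \<Rightarrow> real) \<Rightarrow> ('a \<Rightarrow> 'a) \<Rightarrow> (nat \<Rightarrow> 'a \<Rightarrow> real) \<Rightarrow> (nat \<Rightarrow> 'a \<Rightarrow> 'a)
    \<Rightarrow> ('a \<Rightarrow> real) \<Rightarrow> ('a \<Rightarrow> real) \<Rightarrow> real \<Rightarrow> 'a \<Rightarrow> 'a \<Rightarrow> real \<times> (nat \<Rightarrow> real) \<Rightarrow> bool" where
  "accepted m f gf g gg P1 P2 c xt \<xi> LL \<longleftrightarrow>
     (let z = sub_sol m gf g gg P1 xt \<xi> (fst LL) (snd LL) in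
       feas m g z \<and> Fval f P1 P2 z \<le> Fval f P1 P2 xt - c / 2 * (norm (z - xt))\<^sup>2)"

definition trial_step :: "nat \<Rightarrow> ('a::real_inner \<Rightarrow> real) \<Rightarrow> ('a \<Rightarrow> 'a) \<Rightarrow> (nat \<Rightarrow> 'a \<Rightarrow> real) \<Rightarrow> (nat \<Rightarrow> 'a \<Rightarrow> 'a)
    \<Rightarrow> ('a \<Rightarrow> real) \<Rightarrow> ('a \<Rightarrow> real) \<Rightarrow> real \<Rightarrow> real \<Rightarrow> 'a \<Rightarrow> 'a
    \<Rightarrow> real \<times> (nat \<Rightarrow> real) \<Rightarrow> real \<times> (nat \<Rightarrow> real)" where
  "trial_step m f gf g gg P1 P2 c \<tau> xt \<xi> LL =
     (let z = sub_sol m gf g gg P1 xt \<xi> (fst LL) (snd LL) in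
       if \<not> feas m g z then (fst LL, \<lambda>i. \<tau> * snd LL i)
       else if Fval f P1 P2 z \<le> Fval f P1 P2 xt - c / 2 * (norm (z - xt))\<^sup>2 then LL
       else (\<tau> * fst LL, snd LL))"

definition trials :: "nat \<Rightarrow> ('a::real_inner \<Rightarrow> real) \<Rightarrow> ('a \<Rightarrow> 'a) \<Rightarrow> (nat \<Rightarrow> 'a \<Rightarrow> real) \<Rightarrow> (nat \<Rightarrow> 'a \<Rightarrow> 'a)
    \<Rightarrow> ('a \<Rightarrow> real) \<Rightarrow> ('a \<Rightarrow> real) \<Rightarrow> real \<Rightarrow> real \<Rightarrow> 'a \<Rightarrow> 'a
    \<Rightarrow> real \<times> (nat \<Rightarrow> real) \<Rightarrow> nat \<Rightarrow> real \<times> (nat \<Rightarrow> real)" where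
  "trials m f gf g gg P1 P2 c \<tau> xt \<xi> LL0 k = (trial_step m f gf g gg P1 P2 c \<tau> xt \<xi> ^^ k) LL0"

text \<open>Index of the accepted trial (number of inner iterations minus one).\<close>
definition acc_index :: "nat \<Rightarrow> ('a::real_inner \<Rightarrow> real) \<Rightarrow> ('a \<Rightarrow> 'a) \<Rightarrow> (nat \<Rightarrow> 'a \<Rightarrow> real) \<Rightarrow> (nat \<Rightarrow> 'a \<Rightarrow> 'a)
    \<Rightarrow> ('a \<Rightarrow> real) \<Rightarrow> ('a \<Rightarrow> real) \<Rightarrow> real \<Rightarrow> real \<Rightarrow> 'a \<Rightarrow> 'a \<Rightarrow> real \<times> (nat \<Rightarrow> real) \<Rightarrow> nat" where
  "acc_index m f gf g gg P1 P2 c \<tau> xt \<xi> LL0 =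
     (LEAST k. accepted m f gf g gg P1 P2 c xt \<xi> (trials m f gf g gg P1 P2 c \<tau> xt \<xi> LL0 k))"

text \<open>Outer iterates x^t of SCP_ls, for choice rules xisel (xi^t = xisel t x^t) and
  initial pairs (Lf0 t, Lg0 t).\<close>
primrec scp_x :: "nat \<Rightarrow> ('a::real_inner \<Rightarrow> real) \<Rightarrow> ('a \<Rightarrow> 'a) \<Rightarrow> (nat \<Rightarrow> 'a \<Rightarrow> real) \<Rightarrow> (nat \<Rightarrow> 'a \<Rightarrow> 'a)
    \<Rightarrow> ('a \<Rightarrow> real) \<Rightarrow> ('a \<Rightarrow> real) \<Rightarrow> real \<Rightarrow> real \<Rightarrow> 'a \<Rightarrow> (nat \<Rightarrow> 'a \<Rightarrow> 'a)
    \<Rightarrow> (nat \<Rightarrow> real) \<Rightarrow> (nat \<Rightarrow> nat \<Rightarrow> real) \<Rightarrow> nat \<Rightarrow> 'a" where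
  "scp_x m f gf g gg P1 P2 c \<tau> x0 xisel Lf0 Lg0 0 = x0"
| "scp_x m f gf g gg P1 P2 c \<tau> x0 xisel Lf0 Lg0 (Suc t) =
     (let xt = scp_x m f gf g gg P1 P2 c \<tau> x0 xisel Lf0 Lg0 t;
          \<xi> = xisel t xt;
          LL = trials m f gf g gg P1 P2 c \<tau> xt \<xi> (Lf0 t, Lg0 t)
                 (acc_index m f gf g gg P1 P2 c \<tau> xt \<xi> (Lf0 t, Lg0 t))
      in sub_sol m gf g gg P1 xt \<xi> (fst LL) (snd LL))"

end

theory Submission
  imports Defs
begin



lemma norm_add_sq:
  fixes u v :: "'a::real_inner"
  shows "(norm (u + v))\<^sup>2 = (norm u)\<^sup>2 + 2 * (u \<bullet> v) + (norm v)\<^sup>2"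
  by (simp add: power2_norm_eq_inner inner_add_left inner_add_right inner_commute[of v u])

lemma norm_sq_shift:
  fixes x z p :: "'a::real_inner"
  shows "(norm (x - p))\<^sup>2 = (norm (z - p))\<^sup>2 + 2 * ((z - p) \<bullet> (x - z)) + (norm (x - z))\<^sup>2"
  using norm_add_sq[of "z - p" "x - z"] by simp

lemma quad_comb:
  fixes x z p :: "'a::real_inner"
  shows "(norm (((1 - s) *\<^sub>R z + s *\<^sub>R x) - p))\<^sup>2 = (1 - s) * (norm (z - p))\<^sup>2 + s * (norm (x - p))\<^sup>2 - s * (1 - s) * (norm (x - z))\<^sup>2"
proof -
  have e: "((1 - s) *\<^sub>R z + s *\<^sub>R x) - p = (z - p) + s *\<^sub>R (x - z)" by (simp add: algebra_simps)
  have "(norm ((z - p) + s *\<^sub>R (x - z)))\<^sup>2 = (norm (z - p))\<^sup>2 + 2 * s * ((z - p) \<bullet> (x - z)) + s\<^sup>2 * (norm (x - z))\<^sup>2"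
    by (simp add: norm_add_sq power_mult_distrib)
  then show ?thesis unfolding e norm_sq_shift[of x p z]
    by (simp add: algebra_simps power2_eq_square)
qed

lemma lin_comb:
  fixes x z p b :: "'a::real_inner"
  shows "b \<bullet> (((1 - s) *\<^sub>R z + s *\<^sub>R x) - p) = (1 - s) * (b \<bullet> (z - p)) + s * (b \<bullet> (x - p))"
  by (simp add: algebra_simps inner_diff_right inner_add_right)

lemma small_lemma:
  fixes D E b :: real
  assumes "0 < b" "\<And>s. 0 < s \<Longrightarrow> s < b \<Longrightarrow> 0 \<le> D + s * E"
  shows "0 \<le> D"
proof (rule ccontr)
  assume nD: "\<not> 0 \<le> D"
  define s where "s = min (b/2) (- D / (2 * \<bar>E\<bar> + 1))"
  have pos: "0 < - D / (2 * \<bar>E\<bar> + 1)" using nD by (intro divide_pos_pos) auto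
  have s0: "0 < s" "s < b" using assms pos by (auto simp: s_def)
  have "s * \<bar>E\<bar> \<le> - D / (2 * \<bar>E\<bar> + 1) * \<bar>E\<bar>"
    by (rule mult_right_mono) (auto simp: s_def)
  also have "\<dots> < - D"
  proof -
    have "- D / (2 * \<bar>E\<bar> + 1) * \<bar>E\<bar> = - D * (\<bar>E\<bar> / (2 * \<bar>E\<bar> + 1))" by simp
    also have "\<dots> < - D * 1"
      using nD by (intro mult_strict_left_mono) (auto simp: field_simps)
    finally show ?thesis by simp
  qed
  finally have "s * \<bar>E\<bar> < - D" .
  moreover have "s * E \<le> s * \<bar>E\<bar>" using s0 
    by (intro mult_left_mono) auto
  ultimately show False using assms(2)[OF s0] by linarith
qed




lemma descent:
  fixes f :: "'a::real_inner \<Rightarrow> real"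
  assumes fd: "\<And>x. (f has_derivative (\<lambda>h. gf x \<bullet> h)) (at x)" and lip: "L-lipschitz_on UNIV gf"
  shows "f y \<le> f x + gf x \<bullet> (y - x) + L/2 * (norm (y - x))\<^sup>2"
proof -
  define d where "d = y - x"
  define \<psi> where "\<psi> s = f (x + s *\<^sub>R d) - s * (gf x \<bullet> d) - L/2 * s\<^sup>2 * (norm d)\<^sup>2" for s :: real
  have L0: "0 \<le> L" using lip by (auto simp: lipschitz_on_def)
  have der: "DERIV \<psi> s :> (gf (x + s *\<^sub>R d) \<bullet> d - gf x \<bullet> d - L * s * (norm d)\<^sup>2)" for s
  proof -
    have h1: "((\<lambda>s. x + s *\<^sub>R d) has_derivative (\<lambda>h. h *\<^sub>R d)) (at s)"
      by (auto intro!: derivative_eq_intros)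
    have h2: "((\<lambda>s. f (x + s *\<^sub>R d)) has_derivative (\<lambda>h. gf (x + s *\<^sub>R d) \<bullet> (h *\<^sub>R d))) (at s)"
      using has_derivative_compose[OF h1 fd] by (simp add: o_def)
    have h3: "((\<lambda>s. f (x + s *\<^sub>R d)) has_field_derivative (gf (x + s *\<^sub>R d) \<bullet> d)) (at s)"
      unfolding has_field_derivative_def using h2 by (simp add: mult.commute[of _ "gf (x + s *\<^sub>R d) \<bullet> d"])
    show ?thesis unfolding \<psi>_def
      by (rule derivative_eq_intros h3 | simp)+
  qed
  have "\<psi> 1 \<le> \<psi> 0"
  proof (rule DERIV_nonpos_imp_nonincreasing[of 0 1 \<psi>])
    fix s :: real assume s: "0 \<le> s" "s \<le> 1"
    have "gf (x + s *\<^sub>R d) \<bullet> d - gf x \<bullet> d = (gf (x + s *\<^sub>R d) - gf x) \<bullet> d" by (simp add: inner_diff_left)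
    also have "\<dots> \<le> norm (gf (x + s *\<^sub>R d) - gf x) * norm d" by (rule norm_cauchy_schwarz)
    also have "\<dots> \<le> (L * norm (s *\<^sub>R d)) * norm d"
      using lipschitz_onD[OF lip, of "x + s *\<^sub>R d" x] by (intro mult_right_mono) (auto simp: dist_norm)
    also have "\<dots> = L * s * (norm d)\<^sup>2" using s by (simp add: power2_eq_square)
    finally show "\<exists>y. DERIV \<psi> s :> y \<and> y \<le> 0" using der[of s] by (intro exI[of _ "gf (x + s *\<^sub>R d) \<bullet> d - gf x \<bullet> d - L * s * (norm d)\<^sup>2"]) auto
  qed simp
  then show ?thesis unfolding \<psi>_def d_def by simp
qed




locale subp =
  fixes m :: nat and gf :: "'a::euclidean_space \<Rightarrow> 'a" and g :: "nat \<Rightarrow> 'a \<Rightarrow> real"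
    and gg :: "nat \<Rightarrow> 'a \<Rightarrow> 'a" and P1 :: "'a \<Rightarrow> real" and xt \<xi> :: 'a and a :: real and w :: "nat \<Rightarrow> real"
  assumes P1cvx: "convex_on UNIV P1" and P1cont: "continuous_on UNIV P1"
    and a_pos: "a > 0" and w_pos: "\<And>i. i < m \<Longrightarrow> w i > 0"
begin

abbreviation "Sf x \<equiv> sub_feas m g gg xt w x"
abbreviation "\<Phi> x \<equiv> sub_obj gf P1 xt \<xi> a x"
abbreviation "sol z \<equiv> is_sub_sol m gf g gg P1 xt \<xi> a w z"

lemma le0_comb: "0 \<le> (C::real) \<Longrightarrow> A \<le> 0 \<Longrightarrow> B \<le> 0 \<Longrightarrow> X = A + B - C \<Longrightarrow> X \<le> 0" by linarith

lemma aux1: "0 \<le> D - c * ((1 - s) * N) \<Longrightarrow> 0 \<le> (D - c * N) + s * (c * (N::real))"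
  by (simp add: algebra_simps)
lemma aux2: "0 \<le> X - Z - (N::real) \<Longrightarrow> Z + N \<le> X" by simp

lemma aux3: "(Z::real) \<le> (1 - s) * Z + s * X - c * (s * (1 - s) * N) \<Longrightarrow> 0 \<le> s * (X - Z - c * ((1 - s) * N))"
  by (simp add: algebra_simps)

lemma Gbar_comb:
  "Gbar g gg ((1 - s) *\<^sub>R z + s *\<^sub>R x) xt w i
   = (1 - s) * Gbar g gg z xt w i + s * Gbar g gg x xt w i - w i / 2 * (s * (1 - s) * (norm (x - z))\<^sup>2)"
  unfolding Gbar_def quad_comb lin_comb by (simp add: algebra_simps) (simp add: field_simps)

lemma feas_comb:
  assumes "Sf z" "Sf x" "0 \<le> s" "s \<le> 1"
  shows "Sf ((1 - s) *\<^sub>R z + s *\<^sub>R x)"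
  unfolding sub_feas_def
proof (intro allI impI)
  fix i assume i: "i < m"
  have "0 \<le> w i / 2 * (s * (1 - s) * (norm (x - z))\<^sup>2)"
    using w_pos[OF i] assms by (intro mult_nonneg_nonneg) auto
  moreover have "(1 - s) * Gbar g gg z xt w i \<le> 0" "s * Gbar g gg x xt w i \<le> 0"
    using assms i by (auto simp: sub_feas_def intro: mult_nonneg_nonpos)
  ultimately show "Gbar g gg ((1 - s) *\<^sub>R z + s *\<^sub>R x) xt w i \<le> 0"
    by (rule le0_comb[OF _ _ _ Gbar_comb])
qed

lemma obj_comb:
  assumes "0 \<le> s" "s \<le> 1"
  shows "\<Phi> ((1 - s) *\<^sub>R z + s *\<^sub>R x) \<le> (1 - s) * \<Phi> z + s * \<Phi> x - a / 2 * (s * (1 - s) * (norm (x - z))\<^sup>2)"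
proof -
  have "P1 ((1 - s) *\<^sub>R z + s *\<^sub>R x) \<le> (1 - s) * P1 z + s * P1 x"
    using convex_onD[OF P1cvx, of s z x] assms by auto
  then show ?thesis unfolding sub_obj_def quad_comb lin_comb by (simp add: algebra_simps) (simp add: field_simps)
qed

lemma growth:
  assumes z: "sol z" and x: "Sf x"
  shows "\<Phi> z + a / 2 * (norm (x - z))\<^sup>2 \<le> \<Phi> x"
proof -
  have H: "0 \<le> (\<Phi> x - \<Phi> z - a / 2 * (norm (x - z))\<^sup>2) + s * (a / 2 * (norm (x - z))\<^sup>2)"
    if s: "0 < s" "s < 1" for s
  proof -
    have "Sf ((1 - s) *\<^sub>R z + s *\<^sub>R x)" using z x s by (intro feas_comb) (auto simp: is_sub_sol_def)
    then have "\<Phi> z \<le> \<Phi> ((1 - s) *\<^sub>R z + s *\<^sub>R x)" using z by (auto simp: is_sub_sol_def)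
    also have "\<dots> \<le> (1 - s) * \<Phi> z + s * \<Phi> x - a / 2 * (s * (1 - s) * (norm (x - z))\<^sup>2)"
      using s by (intro obj_comb) auto
    finally have "0 \<le> s * (\<Phi> x - \<Phi> z - a / 2 * ((1 - s) * (norm (x - z))\<^sup>2))"
      by (rule aux3)
    then have "0 \<le> \<Phi> x - \<Phi> z - a / 2 * ((1 - s) * (norm (x - z))\<^sup>2)"
      using s by (simp add: zero_le_mult_iff)
    then show ?thesis by (rule aux1)
  qed
  have "0 \<le> \<Phi> x - \<Phi> z - a / 2 * (norm (x - z))\<^sup>2"
    by (rule small_lemma[of 1 _ "a / 2 * (norm (x - z))\<^sup>2", OF _ H]) auto
  then show ?thesis by (rule aux2)
qed

lemma sol_unique:
  assumes "sol z1" "sol z2" shows "z1 = z2"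
proof -
  have "\<Phi> z1 + a / 2 * (norm (z2 - z1))\<^sup>2 \<le> \<Phi> z2" using growth[OF assms(1)] assms(2) by (auto simp: is_sub_sol_def)
  moreover have "\<Phi> z2 \<le> \<Phi> z1" using assms by (auto simp: is_sub_sol_def)
  ultimately have "a / 2 * (norm (z2 - z1))\<^sup>2 \<le> 0" by simp
  then have "(norm (z2 - z1))\<^sup>2 \<le> 0" using a_pos by (simp add: mult_le_0_iff)
  then show ?thesis by simp
qed

end



context subp begin

lemma Phi_cont: "continuous_on UNIV (\<lambda>x. \<Phi> x)"
  unfolding sub_obj_def by (intro continuous_intros P1cont)

lemma Gbar_cont: "continuous_on UNIV (\<lambda>x. Gbar g gg x xt w i)"
  unfolding Gbar_def by (intro continuous_intros)

lemma closed_Sf: "closed {x. Sf x}"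
proof -
  have "{x. Sf x} = (\<Inter>i\<in>{..<m}. {x. Gbar g gg x xt w i \<le> 0})" by (auto simp: sub_feas_def)
  moreover have "closed {x. Gbar g gg x xt w i \<le> 0}" for i
    by (rule closed_Collect_le[OF Gbar_cont]) (intro continuous_intros)
  ultimately show ?thesis by auto
qed

lemma P1_lower: "\<exists>M\<ge>0. \<forall>x. P1 xt - M * (1 + norm (x - xt)) \<le> P1 x"
proof -
  have "compact (P1 ` cball xt 1)"
    by (rule compact_continuous_image) (auto intro: continuous_on_subset[OF P1cont])
  then obtain B where B: "\<And>y. y \<in> cball xt 1 \<Longrightarrow> \<bar>P1 y\<bar> \<le> B"
    using compact_imp_bounded bounded_iff by (metis image_eqI real_norm_def)
  have B0: "0 \<le> B" using B[of xt] by auto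
  define M where "M = 2 * B"
  have M: "P1 xt - M \<le> P1 y" if "y \<in> cball xt 1" for y
    using B[OF that] B[of xt] by (auto simp: M_def)
  have "P1 xt - M * (1 + norm (x - xt)) \<le> P1 x" for x
  proof (cases "norm (x - xt) \<le> 1")
    case True
    then have "P1 xt - M \<le> P1 x" using M by (auto simp: dist_norm norm_minus_commute)
    moreover have "M \<le> M * (1 + norm (x - xt))" using B0 mult_left_mono[of 1 "1 + norm (x - xt)" M] by (simp add: M_def)
    ultimately show ?thesis by linarith
  next
    case False
    define r where "r = norm (x - xt)"
    have r1: "1 < r" using False r_def by simp
    define y where "y = (1 - 1/r) *\<^sub>R xt + (1/r) *\<^sub>R x"
    have "y - xt = (1/r) *\<^sub>R (x - xt)" by (simp add: y_def algebra_simps)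
    then have "norm (y - xt) = 1" using r1 unfolding r_def by (auto simp: divide_simps)
    then have yc: "y \<in> cball xt 1" by (simp add: dist_norm norm_minus_commute)
    have cv: "P1 y \<le> (1 - 1/r) * P1 xt + (1/r) * P1 x"
      unfolding y_def using r1 by (intro convex_onD[OF P1cvx]) auto
    have "r * P1 y \<le> r * ((1 - 1/r) * P1 xt + (1/r) * P1 x)"
      using cv r1 by (intro mult_left_mono) auto
    also have "\<dots> = (r - 1) * P1 xt + P1 x" using r1 by (simp add: field_simps)
    finally have 1: "r * P1 y \<le> (r - 1) * P1 xt + P1 x" .
    have 2: "r * (P1 xt - M) \<le> r * P1 y" using M[OF yc] r1 by (intro mult_left_mono) auto
    have "P1 xt - M * r \<le> P1 x" using 1 2 by (simp add: algebra_simps)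
    moreover have "M * r \<le> M * (1 + norm (x - xt))" using B0 by (intro mult_left_mono) (auto simp: M_def r_def)
    ultimately show ?thesis by linarith
  qed
  then show ?thesis using B0 by (intro exI[of _ M]) (auto simp: M_def)
qed

lemma sol_exists:
  assumes xtf: "\<And>i. i < m \<Longrightarrow> g i xt \<le> 0"
  shows "\<exists>z. sol z"
proof -
  obtain M where M0: "0 \<le> M" and M: "\<And>x. P1 xt - M * (1 + norm (x - xt)) \<le> P1 x"
    using P1_lower by blast
  define q where "q = gf xt - \<xi>"
  define R where "R = 1 + 2 * (norm q + 2 * M) / a"
  have Sxt: "Sf xt" using xtf by (auto simp: sub_feas_def Gbar_def)
  have Pxt: "\<Phi> xt = P1 xt" by (simp add: sub_obj_def)
  define K where "K = {x. Sf x} \<inter> {x. \<Phi> x \<le> \<Phi> xt}"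
  have bnd: "norm (x - xt) \<le> R" if "x \<in> K" for x
  proof (rule ccontr)
    assume "\<not> norm (x - xt) \<le> R"
    define r where "r = norm (x - xt)"
    have rR: "R < r" using \<open>\<not> _\<close> by (simp add: r_def)
    have R1: "1 \<le> R" using a_pos M0 by (simp add: R_def)
    have "- (norm q * r) \<le> q \<bullet> (x - xt)"
      using Cauchy_Schwarz_ineq2[of q "x - xt"] by (simp add: r_def)
    moreover have "\<Phi> x \<le> P1 xt" using that Pxt by (simp add: K_def)
    moreover note M[of x]
    ultimately have "a / 2 * r\<^sup>2 \<le> norm q * r + M * (1 + r)"
      by (simp add: sub_obj_def q_def r_def)
    also have "\<dots> \<le> (norm q + 2 * M) * r" using M0 rR R1 mult_left_mono[of 1 r M] by (simp add: algebra_simps)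
    finally have A: "a / 2 * r\<^sup>2 \<le> (norm q + 2 * M) * r" .
    have "(norm q + 2 * M) * r < a / 2 * R * r"
    proof -
      have "norm q + 2 * M < a / 2 * R" using a_pos by (simp add: R_def field_simps)
      then show ?thesis using rR R1 by (intro mult_strict_right_mono) auto
    qed
    also have "\<dots> \<le> a / 2 * r * r" using rR R1 a_pos by (intro mult_right_mono mult_left_mono) auto
    finally show False using A by (simp add: power2_eq_square)
  qed
  have "compact K"
  proof -
    have "closed K" unfolding K_def
      by (intro closed_Int closed_Sf closed_Collect_le Phi_cont) (intro continuous_intros)
    moreover have "bounded K"
      using bnd by (intro bounded_subset[OF bounded_cball[of xt R]]) (auto simp: dist_norm norm_minus_commute)
    ultimately show ?thesis by (simp add: compact_eq_bounded_closed)
  qed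
  moreover have "K \<noteq> {}" using Sxt by (auto simp: K_def)
  moreover have "continuous_on K (\<lambda>x. \<Phi> x)" by (rule continuous_on_subset[OF Phi_cont]) auto
  ultimately obtain z where zK: "z \<in> K" and zmin: "\<And>y. y \<in> K \<Longrightarrow> \<Phi> z \<le> \<Phi> y"
    using continuous_attains_inf[of K "\<lambda>x. \<Phi> x"] by blast
  have "sol z" unfolding is_sub_sol_def
  proof (intro conjI allI impI)
    show "Sf z" using zK by (simp add: K_def)
    fix x assume "Sf x"
    show "\<Phi> z \<le> \<Phi> x"
    proof (cases "\<Phi> x \<le> \<Phi> xt")
      case True then show ?thesis using zmin \<open>Sf x\<close> by (auto simp: K_def)
    next
      case False then show ?thesis using zK by (auto simp: K_def)
    qed
  qed
  then show ?thesis ..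
qed

end



lemma farkas:
  fixes p :: "'a::euclidean_space" and v :: "nat \<Rightarrow> 'a"
  assumes fin: "finite I" and H: "\<And>d. (\<forall>i\<in>I. v i \<bullet> d \<le> 0) \<Longrightarrow> p \<bullet> d \<le> 0"
  shows "\<exists>l. (\<forall>i\<in>I. 0 \<le> l i) \<and> p = (\<Sum>i\<in>I. l i *\<^sub>R v i)"
proof -
  define K where "K = {(\<Sum>i\<in>I. l i *\<^sub>R v i) | l. \<forall>i\<in>I. 0 \<le> l i}"
  define S where "S = insert 0 (v ` I)"
  have finS: "finite S" using fin by (simp add: S_def)
  have convK: "convex K" unfolding K_def
  proof (rule convexI, clarify)
    fix l1 l2 :: "nat \<Rightarrow> real" and u1 u2 :: real
    assume "\<forall>i\<in>I. 0 \<le> l1 i" "\<forall>i\<in>I. 0 \<le> l2 i" "0 \<le> u1" "0 \<le> u2"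
    then have "\<forall>i\<in>I. 0 \<le> u1 * l1 i + u2 * l2 i" by auto
    moreover have "u1 *\<^sub>R (\<Sum>i\<in>I. l1 i *\<^sub>R v i) + u2 *\<^sub>R (\<Sum>i\<in>I. l2 i *\<^sub>R v i) = (\<Sum>i\<in>I. (u1 * l1 i + u2 * l2 i) *\<^sub>R v i)"
      by (simp add: scaleR_sum_right sum.distrib scaleR_add_left)
    ultimately show "\<exists>l. u1 *\<^sub>R (\<Sum>i\<in>I. l1 i *\<^sub>R v i) + u2 *\<^sub>R (\<Sum>i\<in>I. l2 i *\<^sub>R v i) = (\<Sum>i\<in>I. l i *\<^sub>R v i) \<and> (\<forall>i\<in>I. 0 \<le> l i)"
      by (intro exI[of _ "\<lambda>i. u1 * l1 i + u2 * l2 i"]) simp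
  qed
  have conK: "conic K" unfolding K_def conic_def
  proof (clarify)
    fix l :: "nat \<Rightarrow> real" and c :: real
    assume "\<forall>i\<in>I. 0 \<le> l i" "0 \<le> c"
    then have "\<forall>i\<in>I. 0 \<le> c * l i" by auto
    moreover have "c *\<^sub>R (\<Sum>i\<in>I. l i *\<^sub>R v i) = (\<Sum>i\<in>I. (c * l i) *\<^sub>R v i)"
      by (simp add: scaleR_sum_right)
    ultimately show "\<exists>l'. c *\<^sub>R (\<Sum>i\<in>I. l i *\<^sub>R v i) = (\<Sum>i\<in>I. l' i *\<^sub>R v i) \<and> (\<forall>i\<in>I. 0 \<le> l' i)"
      by (intro exI[of _ "\<lambda>i. c * l i"]) simp
  qed
  have SK: "S \<subseteq> K"
  proof
    fix x assume "x \<in> S"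
    then consider "x = 0" | j where "j \<in> I" "x = v j" by (auto simp: S_def)
    then show "x \<in> K"
    proof cases
      case 1
      then show ?thesis unfolding K_def by (intro CollectI exI[of _ "\<lambda>i. 0"]) auto
    next
      case 2
      have "(\<Sum>i\<in>I. (if i = j then 1 else 0) *\<^sub>R v i) = (\<Sum>i\<in>I. (if i = j then v i else 0))"
        by (intro sum.cong) auto
      also have "\<dots> = v j" using 2 fin by simp
      finally show ?thesis unfolding K_def using 2
        by (intro CollectI exI[of _ "\<lambda>i. if i = j then 1 else 0"]) auto
    qed
  qed
  have CK: "conic hull (convex hull S) \<subseteq> K"
    by (intro hull_minimal conK hull_minimal[of S K convex] SK convK)
  have KC: "K \<subseteq> conic hull (convex hull S)"
  proof
    fix y assume "y \<in> K"
    then obtain l where l0: "\<forall>i\<in>I. 0 \<le> l i" and y: "y = (\<Sum>i\<in>I. l i *\<^sub>R v i)" by (auto simp: K_def)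
    define L where "L = (\<Sum>i\<in>I. l i)"
    show "y \<in> conic hull (convex hull S)"
    proof (cases "L = 0")
      case True
      then have "\<forall>i\<in>I. l i = 0" using l0 fin by (simp add: L_def sum_nonneg_eq_0_iff)
      then have "y = 0" by (simp add: y)
      moreover have "(0::'a) \<in> convex hull S" by (rule hull_inc) (simp add: S_def)
      ultimately show ?thesis unfolding conic_hull_explicit by (intro CollectI exI[of _ 1] exI[of _ 0]) auto
    next
      case False
      then have Lp: "0 < L" using l0 by (simp add: L_def order_neq_le_trans sum_nonneg)
      have "(\<Sum>i\<in>I. (l i / L) *\<^sub>R v i) \<in> convex hull S"
      proof (rule convex_sum[OF fin convex_convex_hull])
        show "(\<Sum>i\<in>I. l i / L) = 1" using Lp by (simp add: L_def flip: sum_divide_distrib)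
        show "\<And>i. i \<in> I \<Longrightarrow> 0 \<le> l i / L" using l0 Lp by auto
        show "\<And>i. i \<in> I \<Longrightarrow> v i \<in> convex hull S" by (rule hull_inc) (auto simp: S_def)
      qed
      moreover have "y = L *\<^sub>R (\<Sum>i\<in>I. (l i / L) *\<^sub>R v i)"
        using Lp by (simp add: y scaleR_sum_right)
      ultimately show ?thesis unfolding conic_hull_explicit using Lp
        by (intro CollectI exI[of _ L] exI[of _ "\<Sum>i\<in>I. (l i / L) *\<^sub>R v i"]) auto
    qed
  qed
  have closedK: "closed K"
  proof -
    have "K = conic hull (convex hull S)" using CK KC by blast
    moreover have "polytope (convex hull S)" using finS by (rule polytope_convex_hull)
    ultimately show ?thesis using closed_conic_hull_strong by blast
  qed
  have "p \<in> K"
  proof (rule ccontr)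
    assume "p \<notin> K"
    then obtain aa b where ab: "aa \<bullet> p < b" "\<And>x. x \<in> K \<Longrightarrow> aa \<bullet> x > b"
      using separating_hyperplane_closed_point[OF convK closedK] by blast
    have "0 \<in> K" using SK by (auto simp: S_def)
    then have b0: "b < 0" using ab(2)[of 0] by simp
    have "v j \<bullet> (- aa) \<le> 0" if j: "j \<in> I" for j
    proof (rule ccontr)
      assume "\<not> v j \<bullet> (- aa) \<le> 0"
      then have neg: "aa \<bullet> v j < 0" by (simp add: inner_commute)
      define t where "t = b / (aa \<bullet> v j)"
      have t0: "0 \<le> t" using neg b0 by (simp add: t_def divide_nonpos_neg less_imp_le)
      have "v j \<in> K" using SK j by (auto simp: S_def)
      then have "t *\<^sub>R v j \<in> K" using conK t0 by (simp add: conicD)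
      then have "aa \<bullet> (t *\<^sub>R v j) > b" by (rule ab(2))
      moreover have "aa \<bullet> (t *\<^sub>R v j) = b" using neg by (simp add: t_def)
      ultimately show False by simp
    qed
    then have "p \<bullet> (- aa) \<le> 0" using H by blast
    then show False using ab(1) b0 by (simp add: inner_commute)
  qed
  then show ?thesis by (auto simp: K_def)
qed




context subp begin

lemma Gbar_expand:
  "Gbar g gg x xt w i = Gbar g gg z xt w i + (gg i xt + w i *\<^sub>R (z - xt)) \<bullet> (x - z) + w i / 2 * (norm (x - z))\<^sup>2"
proof -
  have e: "gg i xt \<bullet> (x - xt) = gg i xt \<bullet> (z - xt) + gg i xt \<bullet> (x - z)" by (simp add: inner_diff_right)
  show ?thesis unfolding Gbar_def norm_sq_shift[of x xt z] e
    by (simp add: inner_add_left algebra_simps)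
qed

lemma Phi_expand:
  "\<Phi> x = \<Phi> z + (gf xt - \<xi> + a *\<^sub>R (z - xt)) \<bullet> (x - z) + a / 2 * (norm (x - z))\<^sup>2 + P1 x - P1 z"
proof -
  have e: "(gf xt - \<xi>) \<bullet> (x - xt) = (gf xt - \<xi>) \<bullet> (z - xt) + (gf xt - \<xi>) \<bullet> (x - z)" by (simp add: inner_diff_right)
  show ?thesis unfolding sub_obj_def norm_sq_shift[of x xt z] e
    by (simp add: inner_add_left algebra_simps)
qed

lemma P1_isCont: "isCont P1 x"
  using P1cont continuous_on_eq_continuous_at[of UNIV P1] by auto

lemma strict_dir:
  assumes z: "sol z"
    and d: "\<And>i. i < m \<Longrightarrow> Gbar g gg z xt w i = 0 \<Longrightarrow> (gg i xt + w i *\<^sub>R (z - xt)) \<bullet> d < 0"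
  shows "0 \<le> P1 (z + d) - P1 z + (gf xt - \<xi> + a *\<^sub>R (z - xt)) \<bullet> d"
proof -
  define c where "c = gf xt - \<xi> + a *\<^sub>R (z - xt)"
  have zf: "\<And>i. i < m \<Longrightarrow> Gbar g gg z xt w i \<le> 0" using z by (auto simp: is_sub_sol_def sub_feas_def)
  have Gs: "Gbar g gg (z + s *\<^sub>R d) xt w i = Gbar g gg z xt w i + s * ((gg i xt + w i *\<^sub>R (z - xt)) \<bullet> d + w i / 2 * s * (norm d)\<^sup>2)" for s i
    using Gbar_expand[of "z + s *\<^sub>R d" i z] by (simp add: algebra_simps power2_eq_square)
  have ev: "\<forall>i\<in>{..<m}. eventually (\<lambda>s. Gbar g gg (z + s *\<^sub>R d) xt w i < 0) (at_right 0)"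
  proof
    fix i assume "i \<in> {..<m}"
    then have i: "i < m" by simp
    define e where "e = (gg i xt + w i *\<^sub>R (z - xt)) \<bullet> d"
    have tl: "((\<lambda>s. e + w i / 2 * s * (norm d)\<^sup>2) \<longlongrightarrow> e + w i / 2 * 0 * (norm d)\<^sup>2) (at_right 0)"
      by (intro tendsto_intros)
    show "eventually (\<lambda>s. Gbar g gg (z + s *\<^sub>R d) xt w i < 0) (at_right 0)"
    proof (cases "Gbar g gg z xt w i = 0")
      case True
      then have "e < 0" using d[OF i] by (simp add: e_def)
      then have "eventually (\<lambda>s. e + w i / 2 * s * (norm d)\<^sup>2 < 0) (at_right 0)"
        using order_tendstoD(2)[OF tl] by simp
      then show ?thesis using eventually_at_right_less[of 0]
        by eventually_elim (simp add: Gs True e_def mult_pos_neg)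
    next
      case False
      then have neg: "Gbar g gg z xt w i < 0" using zf[OF i] by simp
      have "((\<lambda>s. Gbar g gg z xt w i + s * (e + w i / 2 * s * (norm d)\<^sup>2)) \<longlongrightarrow>
              Gbar g gg z xt w i + 0 * (e + w i / 2 * 0 * (norm d)\<^sup>2)) (at_right 0)"
        by (intro tendsto_intros)
      then have "eventually (\<lambda>s. Gbar g gg z xt w i + s * (e + w i / 2 * s * (norm d)\<^sup>2) < 0) (at_right 0)"
        using order_tendstoD(2) neg by fastforce
      then show ?thesis by (simp add: Gs e_def)
    qed
  qed
  have "eventually (\<lambda>s. \<forall>i\<in>{..<m}. Gbar g gg (z + s *\<^sub>R d) xt w i < 0) (at_right 0)"
    by (rule eventually_ball_finite[OF _ ev]) simp
  then obtain b where b0: "0 < b" and bH: "\<And>s. 0 < s \<Longrightarrow> s < b \<Longrightarrow> \<forall>i\<in>{..<m}. Gbar g gg (z + s *\<^sub>R d) xt w i < 0"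
    unfolding eventually_at_right_field by auto
  have H: "0 \<le> (P1 (z + d) - P1 z + c \<bullet> d) + s * (a / 2 * (norm d)\<^sup>2)" if s: "0 < s" "s < min b 1" for s
  proof -
    have "Sf (z + s *\<^sub>R d)" using bH[of s] s by (auto simp: sub_feas_def less_imp_le)
    then have "\<Phi> z \<le> \<Phi> (z + s *\<^sub>R d)" using z by (auto simp: is_sub_sol_def)
    also have "\<Phi> (z + s *\<^sub>R d) = \<Phi> z + s * (c \<bullet> d) + s * (s * (a / 2 * (norm d)\<^sup>2)) + P1 (z + s *\<^sub>R d) - P1 z"
      using Phi_expand[of "z + s *\<^sub>R d" z] by (simp add: c_def algebra_simps power2_eq_square)
    also have "P1 (z + s *\<^sub>R d) \<le> (1 - s) * P1 z + s * P1 (z + d)"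
    proof -
      have "z + s *\<^sub>R d = (1 - s) *\<^sub>R z + s *\<^sub>R (z + d)" by (simp add: algebra_simps)
      then show ?thesis using convex_onD[OF P1cvx, of s z "z + d"] s by auto
    qed
    finally have "0 \<le> s * ((P1 (z + d) - P1 z + c \<bullet> d) + s * (a / 2 * (norm d)\<^sup>2))"
      by (simp add: algebra_simps)
    then show ?thesis using s by (simp add: zero_le_mult_iff)
  qed
  have "0 \<le> P1 (z + d) - P1 z + c \<bullet> d"
    by (rule small_lemma[of "min b 1" _ "a / 2 * (norm d)\<^sup>2", OF _ H]) (use b0 in auto)
  then show ?thesis by (simp add: c_def)
qed

end



context subp begin

lemma gen_dir:
  assumes z: "sol z" and slater: "\<And>i. i < m \<Longrightarrow> Gbar g gg xh xt w i < 0"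
    and d: "\<And>i. i < m \<Longrightarrow> Gbar g gg z xt w i = 0 \<Longrightarrow> (gg i xt + w i *\<^sub>R (z - xt)) \<bullet> d \<le> 0"
  shows "0 \<le> P1 (z + d) - P1 z + (gf xt - \<xi> + a *\<^sub>R (z - xt)) \<bullet> d"
proof -
  define c where "c = gf xt - \<xi> + a *\<^sub>R (z - xt)"
  define dh where "dh = xh - z"
  have dh: "(gg i xt + w i *\<^sub>R (z - xt)) \<bullet> dh < 0" if i: "i < m" and act: "Gbar g gg z xt w i = 0" for i
  proof -
    have "0 \<le> w i / 2 * (norm (xh - z))\<^sup>2" using w_pos[OF i] by simp
    then show ?thesis using Gbar_expand[of xh i z] slater[OF i] act by (simp add: dh_def)
  qed
  define \<phi> where "\<phi> e = P1 (z + (d + e *\<^sub>R dh)) - P1 z + c \<bullet> (d + e *\<^sub>R dh)" for e :: real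
  have ev: "eventually (\<lambda>e. 0 \<le> \<phi> e) (at_right 0)"
    using eventually_at_right_less[of 0]
  proof eventually_elim
    case (elim e)
    show ?case unfolding \<phi>_def c_def
    proof (rule strict_dir[OF z])
      fix i assume i: "i < m" and act: "Gbar g gg z xt w i = 0"
      have "(gg i xt + w i *\<^sub>R (z - xt)) \<bullet> (d + e *\<^sub>R dh) = (gg i xt + w i *\<^sub>R (z - xt)) \<bullet> d + e * ((gg i xt + w i *\<^sub>R (z - xt)) \<bullet> dh)"
        by (simp add: inner_add_right)
      moreover have "e * ((gg i xt + w i *\<^sub>R (z - xt)) \<bullet> dh) < 0" using elim dh[OF i act] by (simp add: mult_pos_neg)
      ultimately show "(gg i xt + w i *\<^sub>R (z - xt)) \<bullet> (d + e *\<^sub>R dh) < 0" using d[OF i act] by linarith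
    qed
  qed
  have "(\<phi> \<longlongrightarrow> \<phi> 0) (at_right 0)"
  proof -
    have t1: "((\<lambda>e. z + (d + e *\<^sub>R dh)) \<longlongrightarrow> z + (d + 0 *\<^sub>R dh)) (at_right 0)" by (intro tendsto_intros)
    have "((\<lambda>e. P1 (z + (d + e *\<^sub>R dh))) \<longlongrightarrow> P1 (z + (d + 0 *\<^sub>R dh))) (at_right 0)"
      by (rule isCont_tendsto_compose[OF P1_isCont t1])
    then show ?thesis unfolding \<phi>_def by (intro tendsto_intros) simp_all
  qed
  then have "0 \<le> \<phi> 0" by (rule tendsto_lowerbound[OF _ ev]) simp
  then show ?thesis by (simp add: \<phi>_def c_def)
qed

lemma kkt:
  assumes z: "sol z" and slater: "\<And>i. i < m \<Longrightarrow> Gbar g gg xh xt w i < 0"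
  shows "\<exists>lam. (\<forall>i<m. 0 \<le> lam i) \<and> (\<forall>i<m. lam i * Gbar g gg z xt w i = 0) \<and>
    (\<forall>y. P1 z - ((gf xt - \<xi> + a *\<^sub>R (z - xt)) + (\<Sum>i<m. lam i *\<^sub>R (gg i xt + w i *\<^sub>R (z - xt)))) \<bullet> (y - z) \<le> P1 y)"
proof -
  define c where "c = gf xt - \<xi> + a *\<^sub>R (z - xt)"
  define G where "G i = gg i xt + w i *\<^sub>R (z - xt)" for i
  define I where "I = {i \<in> {..<m}. Gbar g gg z xt w i = 0}"
  define \<Delta> where "\<Delta> d = P1 (z + d) - P1 z + c \<bullet> d" for d
  have keyA: "0 \<le> \<Delta> d" if "\<forall>i\<in>I. G i \<bullet> d \<le> 0" for d
    unfolding \<Delta>_def c_def using that by (intro gen_dir[OF z slater]) (auto simp: I_def G_def)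
  define A where "A = {(d, r). \<Delta> d < r}"
  define B where "B = {(d, r::real). r \<le> 0 \<and> (\<forall>i\<in>I. G i \<bullet> d \<le> 0)}"
  have convA: "convex A" unfolding A_def
  proof (rule convexI, clarsimp)
    fix d1 d2 :: 'a and r1 r2 u v :: real
    assume h: "\<Delta> d1 < r1" "\<Delta> d2 < r2" "0 \<le> (u::real)" "0 \<le> v" "u + v = 1"
    have u: "u = 1 - v" using h by simp
    have "P1 (z + (u *\<^sub>R d1 + v *\<^sub>R d2)) \<le> u * P1 (z + d1) + v * P1 (z + d2)"
    proof -
      have "z + (u *\<^sub>R d1 + v *\<^sub>R d2) = (1 - v) *\<^sub>R (z + d1) + v *\<^sub>R (z + d2)" unfolding u by (simp add: algebra_simps)
      then show ?thesis using convex_onD[OF P1cvx, of v "z + d1" "z + d2"] h u by auto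
    qed
    moreover have e1: "P1 z = u * P1 z + v * P1 z" using h(5) by (metis distrib_right mult_1)
    moreover have e2: "c \<bullet> (u *\<^sub>R d1 + v *\<^sub>R d2) = u * (c \<bullet> d1) + v * (c \<bullet> d2)" by (simp add: inner_add_right)
    ultimately have "\<Delta> (u *\<^sub>R d1 + v *\<^sub>R d2) \<le> u * \<Delta> d1 + v * \<Delta> d2"
      unfolding \<Delta>_def distrib_left right_diff_distrib by linarith
    also have "\<dots> < u * r1 + v * r2"
    proof (cases "u = 0")
      case True then show ?thesis using h by simp
    next
      case False
      then have "u * \<Delta> d1 < u * r1" using h by (intro mult_strict_left_mono) auto
      moreover have "v * \<Delta> d2 \<le> v * r2" using h by (intro mult_left_mono) auto
      ultimately show ?thesis by linarith
    qed
    finally show "\<Delta> (u *\<^sub>R d1 + v *\<^sub>R d2) < u * r1 + v * r2" .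
  qed
  have convB: "convex B" unfolding B_def
  proof (rule convexI, clarsimp)
    fix d1 d2 :: 'a and r1 r2 u v :: real
    assume h: "r1 \<le> 0" "\<forall>i\<in>I. G i \<bullet> d1 \<le> 0" "r2 \<le> 0" "\<forall>i\<in>I. G i \<bullet> d2 \<le> 0" "0 \<le> (u::real)" "0 \<le> v" "u + v = 1"
    show "u * r1 + v * r2 \<le> 0 \<and> (\<forall>i\<in>I. G i \<bullet> (u *\<^sub>R d1 + v *\<^sub>R d2) \<le> 0)"
      using h by (auto simp: inner_add_right intro!: add_nonpos_nonpos mult_nonneg_nonpos)
  qed
  have "(0, 1) \<in> A" by (simp add: A_def \<Delta>_def)
  then have neA: "A \<noteq> {}" by blast
  have "(0, 0) \<in> B" by (simp add: B_def)
  then have neB: "B \<noteq> {}" by blast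
  have disj: "A \<inter> B = {}" using keyA by (force simp: A_def B_def)
  obtain aa b where aa0: "aa \<noteq> 0" and hA: "\<And>x. x \<in> A \<Longrightarrow> aa \<bullet> x \<le> b" and hB: "\<And>x. x \<in> B \<Longrightarrow> aa \<bullet> x \<ge> b"
    using separating_hyperplane_sets[OF convA convB neA neB disj] by blast
  obtain p p0 where aa: "aa = (p, p0)" by force
  have b0: "b \<le> 0" using hB[of "(0, 0)"] by (simp add: aa B_def)
  have At: "(d, \<Delta> d + t) \<in> A" if "0 < t" for d t using that by (simp add: A_def)
  have p0t: "p0 * t \<le> b" if "0 < t" for t using hA[OF At[OF that, of 0]] by (simp add: aa \<Delta>_def)
  have Hb: "0 \<le> b + t * (- p0)" if "0 < t" "t < 1" for t using p0t[of t] that by (simp add: mult.commute)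
  have "0 \<le> b" by (rule small_lemma[of 1 b "- p0", OF _ Hb]) auto
  then have b00: "b = 0" using b0 by simp
  have pd: "p \<bullet> d + p0 * \<Delta> d \<le> 0" for d
  proof -
    have Hd: "0 \<le> (- (p \<bullet> d + p0 * \<Delta> d)) + t * (- p0)" if "0 < t" "t < 1" for t
      using hA[OF At[of t d]] that b00 by (simp add: aa algebra_simps)
    have "0 \<le> - (p \<bullet> d + p0 * \<Delta> d)" by (rule small_lemma[of 1 _ "- p0", OF _ Hd]) auto
    then show ?thesis by simp
  qed
  have p0n: "p0 \<le> 0" using p0t[of 1] b00 by simp
  have "p0 \<noteq> 0"
  proof
    assume "p0 = 0"
    then have "p \<bullet> p \<le> 0" using pd[of p] by simp
    then have "p = 0" by (metis inner_gt_zero_iff not_le)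
    then show False using aa0 \<open>p0 = 0\<close> aa by (simp add: zero_prod_def)
  qed
  then have mu: "0 < - p0" using p0n by simp
  define \<pi> where "\<pi> = (1 / p0) *\<^sub>R p"
  have piT: "\<pi> \<bullet> d \<le> 0" if "\<forall>i\<in>I. G i \<bullet> d \<le> 0" for d
  proof -
    have "(d, 0) \<in> B" using that by (simp add: B_def)
    then have "0 \<le> p \<bullet> d" using hB b00 by (force simp: aa)
    then show ?thesis using mu by (simp add: \<pi>_def divide_nonneg_neg)
  qed
  have piD: "0 \<le> \<Delta> d + \<pi> \<bullet> d" for d
  proof -
    have "p \<bullet> d \<le> (- p0) * \<Delta> d" using pd[of d] by simp
    then have "(1 / (- p0)) * (p \<bullet> d) \<le> \<Delta> d" using mu by (simp add: field_simps)
    then show ?thesis by (simp add: \<pi>_def)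
  qed
  have finI: "finite I" by (simp add: I_def)
  obtain l where l0: "\<forall>i\<in>I. 0 \<le> l i" and lpi: "\<pi> = (\<Sum>i\<in>I. l i *\<^sub>R G i)"
    using farkas[OF finI, of G \<pi>] piT by (auto simp: inner_commute)
  define lam where "lam i = (if i \<in> I then l i else 0)" for i
  have sumeq: "(\<Sum>i<m. lam i *\<^sub>R G i) = \<pi>"
  proof -
    have "(\<Sum>i<m. lam i *\<^sub>R G i) = (\<Sum>i<m. if Gbar g gg z xt w i = 0 then l i *\<^sub>R G i else 0)"
      by (intro sum.cong) (auto simp: lam_def I_def)
    also have "\<dots> = (\<Sum>i\<in>I. l i *\<^sub>R G i)" unfolding I_def by (rule sum.inter_filter[symmetric]) simp
    finally show ?thesis using lpi by simp
  qed
  show ?thesis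
  proof (intro exI[of _ lam] conjI allI impI)
    fix i assume "i < m" then show "0 \<le> lam i" using l0 by (auto simp: lam_def)
  next
    fix i assume "i < m" then show "lam i * Gbar g gg z xt w i = 0" by (auto simp: lam_def I_def)
  next
    fix y
    have "0 \<le> \<Delta> (y - z) + \<pi> \<bullet> (y - z)" by (rule piD)
    then show "P1 z - ((gf xt - \<xi> + a *\<^sub>R (z - xt)) + (\<Sum>i<m. lam i *\<^sub>R (gg i xt + w i *\<^sub>R (z - xt)))) \<bullet> (y - z) \<le> P1 y"
      using sumeq unfolding \<Delta>_def c_def G_def by (simp add: inner_add_left)
  qed
qed

end



context subp begin

lemma SG1:
  "(\<Sum>i<m. lam i * Gbar g gg x xt w i) = (\<Sum>i<m. lam i * (g i xt + gg i xt \<bullet> (x - xt))) + (\<Sum>i<m. lam i * w i) / 2 * (norm (x - xt))\<^sup>2"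
proof -
  have "(\<Sum>i<m. lam i * Gbar g gg x xt w i) = (\<Sum>i<m. lam i * (g i xt + gg i xt \<bullet> (x - xt)) + (lam i * w i) / 2 * (norm (x - xt))\<^sup>2)"
    by (intro sum.cong) (auto simp: Gbar_def algebra_simps)
  also have "\<dots> = (\<Sum>i<m. lam i * (g i xt + gg i xt \<bullet> (x - xt))) + (\<Sum>i<m. lam i * w i) / 2 * (norm (x - xt))\<^sup>2"
    by (simp add: sum.distrib sum_distrib_right sum_divide_distrib)
  finally show ?thesis .
qed

lemma SG2:
  "(\<Sum>i<m. lam i * Gbar g gg x xt w i) = (\<Sum>i<m. lam i * Gbar g gg z xt w i)
     + (\<Sum>i<m. lam i *\<^sub>R (gg i xt + w i *\<^sub>R (z - xt))) \<bullet> (x - z) + (\<Sum>i<m. lam i * w i) / 2 * (norm (x - z))\<^sup>2"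
proof -
  have "(\<Sum>i<m. lam i * Gbar g gg x xt w i) = (\<Sum>i<m. lam i * Gbar g gg z xt w i + lam i * ((gg i xt + w i *\<^sub>R (z - xt)) \<bullet> (x - z)) + (lam i * w i) / 2 * (norm (x - z))\<^sup>2)"
    by (intro sum.cong refl) (subst Gbar_expand[of x _ z], simp add: algebra_simps)
  also have "\<dots> = (\<Sum>i<m. lam i * Gbar g gg z xt w i)
     + (\<Sum>i<m. lam i *\<^sub>R (gg i xt + w i *\<^sub>R (z - xt))) \<bullet> (x - z) + (\<Sum>i<m. lam i * w i) / 2 * (norm (x - z))\<^sup>2"
    by (simp add: sum.distrib sum_distrib_right sum_divide_distrib inner_sum_left)
  finally show ?thesis .
qed

lemma sumG:
  "(\<Sum>i<m. lam i *\<^sub>R (gg i xt + w i *\<^sub>R (z - xt))) = (\<Sum>i<m. lam i *\<^sub>R gg i xt) + (\<Sum>i<m. lam i * w i) *\<^sub>R (z - xt)"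
  by (simp add: scaleR_add_right sum.distrib scaleR_sum_left)

lemma arith1: "fz \<le> fxt + gz + lf \<Longrightarrow> p2x + xz \<le> p2z \<Longrightarrow> Pz = (gz - xz) + a2 + p1z \<Longrightarrow> Px + S = qx + L1 + p1x + S1
   \<Longrightarrow> Pz + L2 \<le> Px + S \<Longrightarrow> al = a2 - lf \<Longrightarrow> fz + p1z - p2z \<le> fxt + qx + L1 + p1x - p2x + S1 - L2 - (al::real)"
  by linarith

lemma iv_part:
  fixes f P2 :: "'a \<Rightarrow> real" and Lf :: real
  assumes z: "sol z" and slater: "\<And>i. i < m \<Longrightarrow> Gbar g gg xh xt w i < 0"
    and fd: "\<And>x. (f has_derivative (\<lambda>h. gf x \<bullet> h)) (at x)" and lip: "Lf-lipschitz_on UNIV gf"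
    and xi: "\<xi> \<in> subgrad P2 xt"
  shows "\<exists>lam :: nat \<Rightarrow> real.
          (\<forall>i<m. lam i \<ge> 0)
          \<and> (\<forall>x. sub_obj gf P1 xt \<xi> a z + (\<Sum>i<m. lam i * Gbar g gg z xt w i)
                 \<le> sub_obj gf P1 xt \<xi> a x + (\<Sum>i<m. lam i * Gbar g gg x xt w i))
          \<and> (\<forall>i<m. lam i * (g i xt + gg i xt \<bullet> (z - xt) + w i / 2 * (norm (z - xt))\<^sup>2) = 0)
          \<and> (let Lfg = a + (\<Sum>i<m. lam i * w i) in
              0 \<in> (\<lambda>v. gf xt - \<xi> + Lfg *\<^sub>R (z - xt) + v + (\<Sum>i<m. lam i *\<^sub>R gg i xt)) ` subgrad P1 z
              \<and> (feas m g z \<longrightarrow>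
                  (\<forall>x. Fval f P1 P2 z
                       \<le> f xt + (gf xt - \<xi>) \<bullet> (x - xt)
                         + Lfg / 2 * (norm (x - xt))\<^sup>2 + P1 x - P2 xt
                         + (\<Sum>i<m. lam i * (g i xt + gg i xt \<bullet> (x - xt)))
                         - Lfg / 2 * (norm (x - z))\<^sup>2
                         - (a - Lf) / 2 * (norm (z - xt))\<^sup>2)))"
proof -
  obtain lam where l0: "\<forall>i<m. 0 \<le> lam i" and cs: "\<forall>i<m. lam i * Gbar g gg z xt w i = 0"
    and sg: "\<forall>y. P1 z - ((gf xt - \<xi> + a *\<^sub>R (z - xt)) + (\<Sum>i<m. lam i *\<^sub>R (gg i xt + w i *\<^sub>R (z - xt)))) \<bullet> (y - z) \<le> P1 y"
    using kkt[OF z slater] by blast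
  define V where "V = (gf xt - \<xi> + a *\<^sub>R (z - xt)) + (\<Sum>i<m. lam i *\<^sub>R (gg i xt + w i *\<^sub>R (z - xt)))"
  define Lw where "Lw = (\<Sum>i<m. lam i * w i)"
  define Lfg where "Lfg = a + Lw"
  have Lw0: "0 \<le> Lw" unfolding Lw_def using l0 w_pos by (intro sum_nonneg) (simp add: less_imp_le)
  have V2: "V = gf xt - \<xi> + Lfg *\<^sub>R (z - xt) + (\<Sum>i<m. lam i *\<^sub>R gg i xt)"
    unfolding V_def sumG Lfg_def Lw_def by (simp add: algebra_simps)
  have SGz: "(\<Sum>i<m. lam i * Gbar g gg z xt w i) = 0" using cs by (intro sum.neutral) simp
  have Lgrow: "\<Phi> z + Lfg / 2 * (norm (x - z))\<^sup>2 \<le> \<Phi> x + (\<Sum>i<m. lam i * Gbar g gg x xt w i)" for x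
  proof -
    have "\<Phi> x + (\<Sum>i<m. lam i * Gbar g gg x xt w i) = \<Phi> z + V \<bullet> (x - z) + P1 x - P1 z + Lfg / 2 * (norm (x - z))\<^sup>2"
      unfolding SG2[of lam x z] SGz Phi_expand[of x z] V_def Lfg_def Lw_def
      by (simp add: inner_add_left algebra_simps add_divide_distrib)
    moreover have "P1 z - V \<bullet> (x - z) \<le> P1 x" using sg by (simp add: V_def)
    ultimately show ?thesis by linarith
  qed
  show ?thesis
  proof (intro exI[of _ lam] conjI allI impI)
    show "\<And>i. i < m \<Longrightarrow> 0 \<le> lam i" using l0 by simp
    show "\<And>x. \<Phi> z + (\<Sum>i<m. lam i * Gbar g gg z xt w i) \<le> \<Phi> x + (\<Sum>i<m. lam i * Gbar g gg x xt w i)"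
    proof -
      fix x
      have "0 \<le> Lfg / 2 * (norm (x - z))\<^sup>2" using a_pos Lw0 by (simp add: Lfg_def)
      then show "\<Phi> z + (\<Sum>i<m. lam i * Gbar g gg z xt w i) \<le> \<Phi> x + (\<Sum>i<m. lam i * Gbar g gg x xt w i)"
        using Lgrow[of x] SGz by linarith
    qed
    show "\<And>i. i < m \<Longrightarrow> lam i * (g i xt + gg i xt \<bullet> (z - xt) + w i / 2 * (norm (z - xt))\<^sup>2) = 0"
      using cs by (simp add: Gbar_def)
    show "let Lfg = a + (\<Sum>i<m. lam i * w i) in
              0 \<in> (\<lambda>v. gf xt - \<xi> + Lfg *\<^sub>R (z - xt) + v + (\<Sum>i<m. lam i *\<^sub>R gg i xt)) ` subgrad P1 z
              \<and> (feas m g z \<longrightarrow>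
                  (\<forall>x. Fval f P1 P2 z
                       \<le> f xt + (gf xt - \<xi>) \<bullet> (x - xt)
                         + Lfg / 2 * (norm (x - xt))\<^sup>2 + P1 x - P2 xt
                         + (\<Sum>i<m. lam i * (g i xt + gg i xt \<bullet> (x - xt)))
                         - Lfg / 2 * (norm (x - z))\<^sup>2
                         - (a - Lf) / 2 * (norm (z - xt))\<^sup>2))"
      unfolding Let_def Lw_def[symmetric] Lfg_def[symmetric]
    proof (intro conjI impI allI)
      have "- V \<in> subgrad P1 z" unfolding subgrad_def using sg by (simp add: V_def inner_minus_left algebra_simps)
      moreover have "gf xt - \<xi> + Lfg *\<^sub>R (z - xt) + (- V) + (\<Sum>i<m. lam i *\<^sub>R gg i xt) = 0" unfolding V2 by simp
      ultimately show "0 \<in> (\<lambda>v. gf xt - \<xi> + Lfg *\<^sub>R (z - xt) + v + (\<Sum>i<m. lam i *\<^sub>R gg i xt)) ` subgrad P1 z"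
        by (intro image_eqI[where x = "- V"]) auto
    next
      fix x
      have d: "f z \<le> f xt + gf xt \<bullet> (z - xt) + Lf / 2 * (norm (z - xt))\<^sup>2" by (rule descent[OF fd lip])
      have p2: "P2 xt + \<xi> \<bullet> (z - xt) \<le> P2 z" using xi by (simp add: subgrad_def)
      have phiz: "\<Phi> z = (gf xt - \<xi>) \<bullet> (z - xt) + a / 2 * (norm (z - xt))\<^sup>2 + P1 z" by (simp add: sub_obj_def)
      have phix: "\<Phi> x + (\<Sum>i<m. lam i * Gbar g gg x xt w i) = (gf xt - \<xi>) \<bullet> (x - xt) + Lfg / 2 * (norm (x - xt))\<^sup>2 + P1 x
            + (\<Sum>i<m. lam i * (g i xt + gg i xt \<bullet> (x - xt)))"
        unfolding SG1 sub_obj_def Lfg_def Lw_def by (simp add: algebra_simps add_divide_distrib)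
      have "(gf xt - \<xi>) \<bullet> (z - xt) = gf xt \<bullet> (z - xt) - \<xi> \<bullet> (z - xt)" by (simp add: inner_diff_left)
      then have phiz': "\<Phi> z = (gf xt \<bullet> (z - xt) - \<xi> \<bullet> (z - xt)) + a / 2 * (norm (z - xt))\<^sup>2 + P1 z" using phiz by simp
      show "Fval f P1 P2 z \<le> f xt + (gf xt - \<xi>) \<bullet> (x - xt)
                         + Lfg / 2 * (norm (x - xt))\<^sup>2 + P1 x - P2 xt
                         + (\<Sum>i<m. lam i * (g i xt + gg i xt \<bullet> (x - xt)))
                         - Lfg / 2 * (norm (x - z))\<^sup>2
                         - (a - Lf) / 2 * (norm (z - xt))\<^sup>2"
      proof -
        have e: "(a - Lf) / 2 * (norm (z - xt))\<^sup>2 = a / 2 * (norm (z - xt))\<^sup>2 - Lf / 2 * (norm (z - xt))\<^sup>2"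
          by (simp add: field_simps)
        show ?thesis unfolding Fval_def by (rule arith1[OF d p2 phiz' phix Lgrow[of x] e])
      qed
    qed
  qed
qed

end



context subp begin

lemma sub_sol_sol:
  assumes xtf: "\<And>i. i < m \<Longrightarrow> g i xt \<le> 0"
  shows "sol (sub_sol m gf g gg P1 xt \<xi> a w)" and "\<exists>!z. sol z"
proof -
  show eu: "\<exists>!z. sol z" using sol_exists[OF xtf] sol_unique by blast
  show "sol (sub_sol m gf g gg P1 xt \<xi> a w)" unfolding sub_sol_def by (rule theI'[OF eu])
qed

lemma acc_f:
  fixes f P2 :: "'a \<Rightarrow> real" and Lf c :: real
  assumes z: "sol z" and xtf: "\<And>i. i < m \<Longrightarrow> g i xt \<le> 0"
    and fd: "\<And>x. (f has_derivative (\<lambda>h. gf x \<bullet> h)) (at x)" and lip: "Lf-lipschitz_on UNIV gf"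
    and xi: "\<xi> \<in> subgrad P2 xt" and c: "0 < c" and aL: "Lf + c \<le> a"
  shows "Fval f P1 P2 z \<le> Fval f P1 P2 xt - c / 2 * (norm (z - xt))\<^sup>2"
proof -
  have Lf0: "0 \<le> Lf" using lip by (auto simp: lipschitz_on_def)
  have Sxt: "Sf xt" using xtf by (auto simp: sub_feas_def Gbar_def)
  have gr: "\<Phi> z + a / 2 * (norm (xt - z))\<^sup>2 \<le> \<Phi> xt" by (rule growth[OF z Sxt])
  have Pxt: "\<Phi> xt = P1 xt" by (simp add: sub_obj_def)
  have phiz: "\<Phi> z = (gf xt \<bullet> (z - xt) - \<xi> \<bullet> (z - xt)) + a / 2 * (norm (z - xt))\<^sup>2 + P1 z"
    by (simp add: sub_obj_def inner_diff_left)
  have d: "f z \<le> f xt + gf xt \<bullet> (z - xt) + Lf / 2 * (norm (z - xt))\<^sup>2" by (rule descent[OF fd lip])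
  have p2: "P2 xt + \<xi> \<bullet> (z - xt) \<le> P2 z" using xi by (simp add: subgrad_def)
  have nz: "norm (xt - z) = norm (z - xt)" by (rule norm_minus_commute)
  have "c / 2 * (norm (z - xt))\<^sup>2 \<le> (a - Lf / 2) * (norm (z - xt))\<^sup>2"
    using aL Lf0 c by (intro mult_right_mono) auto
  moreover have "(a - Lf / 2) * (norm (z - xt))\<^sup>2 = a / 2 * (norm (z - xt))\<^sup>2 + a / 2 * (norm (z - xt))\<^sup>2 - Lf / 2 * (norm (z - xt))\<^sup>2"
    by (simp add: algebra_simps)
  ultimately show ?thesis using gr Pxt phiz d p2 unfolding Fval_def nz by linarith
qed

lemma acc_g:
  fixes Lg :: "nat \<Rightarrow> real"
  assumes z: "sol z"
    and gd: "\<And>i x. i < m \<Longrightarrow> (g i has_derivative (\<lambda>h. gg i x \<bullet> h)) (at x)"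
    and glip: "\<And>i. i < m \<Longrightarrow> (Lg i)-lipschitz_on UNIV (gg i)"
    and wL: "\<And>i. i < m \<Longrightarrow> Lg i \<le> w i"
  shows "feas m g z"
  unfolding feas_def
proof (intro allI impI)
  fix i assume i: "i < m"
  have "g i z \<le> g i xt + gg i xt \<bullet> (z - xt) + Lg i / 2 * (norm (z - xt))\<^sup>2"
    by (rule descent[OF gd[OF i] glip[OF i]])
  also have "\<dots> \<le> Gbar g gg z xt w i" unfolding Gbar_def
    using wL[OF i] by (intro add_left_mono mult_right_mono) auto
  also have "\<dots> \<le> 0" using z i by (auto simp: is_sub_sol_def sub_feas_def)
  finally show "g i z \<le> 0" .
qed

lemma slater_exists:
  assumes xtf: "\<And>i. i < m \<Longrightarrow> g i xt \<le> 0"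
    and d: "\<And>i. i < m \<Longrightarrow> g i xt = 0 \<Longrightarrow> gg i xt \<bullet> d < 0"
  shows "\<exists>xh. \<forall>i<m. Gbar g gg xh xt w i < 0"
proof -
  have Gs: "Gbar g gg (xt + s *\<^sub>R d) xt w i = g i xt + s * (gg i xt \<bullet> d + w i / 2 * s * (norm d)\<^sup>2)" for s i
    by (simp add: Gbar_def algebra_simps power2_eq_square)
  have ev: "\<forall>i\<in>{..<m}. eventually (\<lambda>s. Gbar g gg (xt + s *\<^sub>R d) xt w i < 0) (at_right 0)"
  proof
    fix i assume "i \<in> {..<m}"
    then have i: "i < m" by simp
    define e where "e = gg i xt \<bullet> d"
    have tl: "((\<lambda>s. e + w i / 2 * s * (norm d)\<^sup>2) \<longlongrightarrow> e + w i / 2 * 0 * (norm d)\<^sup>2) (at_right 0)"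
      by (intro tendsto_intros)
    show "eventually (\<lambda>s. Gbar g gg (xt + s *\<^sub>R d) xt w i < 0) (at_right 0)"
    proof (cases "g i xt = 0")
      case True
      then have "e < 0" using d[OF i] by (simp add: e_def)
      then have "eventually (\<lambda>s. e + w i / 2 * s * (norm d)\<^sup>2 < 0) (at_right 0)"
        using order_tendstoD(2)[OF tl] by simp
      then show ?thesis using eventually_at_right_less[of 0]
        by eventually_elim (simp add: Gs True e_def mult_pos_neg)
    next
      case False
      then have neg: "g i xt < 0" using xtf[OF i] by simp
      have "((\<lambda>s. g i xt + s * (e + w i / 2 * s * (norm d)\<^sup>2)) \<longlongrightarrow>
              g i xt + 0 * (e + w i / 2 * 0 * (norm d)\<^sup>2)) (at_right 0)"
        by (intro tendsto_intros)
      then have "eventually (\<lambda>s. g i xt + s * (e + w i / 2 * s * (norm d)\<^sup>2) < 0) (at_right 0)"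
        using order_tendstoD(2) neg by fastforce
      then show ?thesis by (simp add: Gs e_def)
    qed
  qed
  have "eventually (\<lambda>s. \<forall>i\<in>{..<m}. Gbar g gg (xt + s *\<^sub>R d) xt w i < 0) (at_right 0)"
    by (rule eventually_ball_finite[OF _ ev]) simp
  then obtain b where b0: "0 < b" and bH: "\<And>s. 0 < s \<Longrightarrow> s < b \<Longrightarrow> \<forall>i\<in>{..<m}. Gbar g gg (xt + s *\<^sub>R d) xt w i < 0"
    unfolding eventually_at_right_field by auto
  have "\<forall>i<m. Gbar g gg (xt + (b/2) *\<^sub>R d) xt w i < 0" using bH[of "b/2"] b0 by auto
  then show ?thesis by blast
qed

end



lemma trials_Suc:
  "trials m f gf g gg P1 P2 c \<tau> xt \<xi> LL0 (Suc k) = trial_step m f gf g gg P1 P2 c \<tau> xt \<xi> (trials m f gf g gg P1 P2 c \<tau> xt \<xi> LL0 k)"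
  by (simp add: trials_def)

lemma trials_0: "trials m f gf g gg P1 P2 c \<tau> xt \<xi> LL0 0 = LL0"
  by (simp add: trials_def)

lemma trial_step_cases:
  "trial_step m f gf g gg P1 P2 c \<tau> xt \<xi> LL = (fst LL, \<lambda>i. \<tau> * snd LL i) \<or>
   trial_step m f gf g gg P1 P2 c \<tau> xt \<xi> LL = LL \<or>
   trial_step m f gf g gg P1 P2 c \<tau> xt \<xi> LL = (\<tau> * fst LL, snd LL)"
  unfolding trial_step_def Let_def by auto

lemma trials_bounds:
  fixes Lmin Lmax \<tau> :: real
  assumes tau: "1 < \<tau>" and Lmin: "0 < Lmin"
    and L0: "Lmin \<le> fst LL0" "fst LL0 \<le> Lmax" "\<And>i. i < m \<Longrightarrow> Lmin \<le> snd LL0 i \<and> snd LL0 i \<le> Lmax"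
  shows "Lmin \<le> fst (trials m f gf g gg P1 P2 c \<tau> xt \<xi> LL0 k) \<and> fst (trials m f gf g gg P1 P2 c \<tau> xt \<xi> LL0 k) \<le> Lmax * \<tau> ^ k
     \<and> (\<forall>i<m. Lmin \<le> snd (trials m f gf g gg P1 P2 c \<tau> xt \<xi> LL0 k) i \<and> snd (trials m f gf g gg P1 P2 c \<tau> xt \<xi> LL0 k) i \<le> Lmax * \<tau> ^ k)"
proof (induction k)
  case 0 then show ?case using L0 by (simp add: trials_0)
next
  case (Suc k)
  define LL where "LL = trials m f gf g gg P1 P2 c \<tau> xt \<xi> LL0 k"
  have IH: "Lmin \<le> fst LL" "fst LL \<le> Lmax * \<tau> ^ k" "\<And>i. i < m \<Longrightarrow> Lmin \<le> snd LL i \<and> snd LL i \<le> Lmax * \<tau> ^ k"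
    using Suc.IH by (auto simp: LL_def)
  have Lmax0: "0 \<le> Lmax" using L0 Lmin by linarith
  have pk: "Lmax * \<tau> ^ k \<le> Lmax * \<tau> ^ Suc k" using tau Lmax0 by (intro mult_left_mono) auto
  have up: "\<tau> * x \<le> Lmax * \<tau> ^ Suc k" if "x \<le> Lmax * \<tau> ^ k" for x
  proof -
    have "\<tau> * x \<le> \<tau> * (Lmax * \<tau> ^ k)" using that tau by (intro mult_left_mono) auto
    then show ?thesis by (simp add: algebra_simps)
  qed
  have lo: "Lmin \<le> \<tau> * x" if "Lmin \<le> x" for x
  proof -
    have "1 * x \<le> \<tau> * x" using that tau Lmin by (intro mult_right_mono) auto
    then show ?thesis using that by simp
  qed
  show ?case unfolding trials_Suc LL_def[symmetric]
    using trial_step_cases[of m f gf g gg P1 P2 c \<tau> xt \<xi> LL] IH pk up lo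
    by (elim disjE) (auto intro: order_trans)
qed

lemma trials_accept:
  fixes f P1 P2 :: "'a::euclidean_space \<Rightarrow> real" and Lf c Lmin Lmax \<tau> :: real and Lg :: "nat \<Rightarrow> real"
  assumes P1cvx: "convex_on UNIV P1" and P1cont: "continuous_on UNIV P1"
    and fd: "\<And>x. (f has_derivative (\<lambda>h. gf x \<bullet> h)) (at x)" and lip: "Lf-lipschitz_on UNIV gf"
    and gd: "\<And>i x. i < m \<Longrightarrow> (g i has_derivative (\<lambda>h. gg i x \<bullet> h)) (at x)"
    and glip: "\<And>i. i < m \<Longrightarrow> (Lg i)-lipschitz_on UNIV (gg i)"
    and xtf: "\<And>i. i < m \<Longrightarrow> g i xt \<le> 0" and xi: "\<xi> \<in> subgrad P2 xt"
    and c: "0 < c" and tau: "1 < \<tau>" and Lmin: "0 < Lmin"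
    and L0: "Lmin \<le> fst LL0" "fst LL0 \<le> Lmax" "\<And>i. i < m \<Longrightarrow> Lmin \<le> snd LL0 i \<and> snd LL0 i \<le> Lmax"
    and Nf: "Lf + c \<le> Lmin * \<tau> ^ Nf" and Ng: "\<And>i. i < m \<Longrightarrow> Lg i \<le> Lmin * \<tau> ^ Ng"
  shows "\<exists>k < Nf + Ng + 1. accepted m f gf g gg P1 P2 c xt \<xi> (trials m f gf g gg P1 P2 c \<tau> xt \<xi> LL0 k)"
proof (rule ccontr)
  assume na: "\<not> ?thesis"
  let ?T = "trials m f gf g gg P1 P2 c \<tau> xt \<xi> LL0"
  have inv: "k \<le> Nf + Ng + 1 \<Longrightarrow> \<exists>p q. p \<le> Nf \<and> q \<le> Ng \<and> p + q = k \<and> ?T k = (fst LL0 * \<tau> ^ p, \<lambda>i. snd LL0 i * \<tau> ^ q)" for k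
  proof (induction k)
    case 0 then show ?case by (intro exI[of _ 0]) (simp add: trials_0)
  next
    case (Suc k)
    then obtain p q where pq: "p \<le> Nf" "q \<le> Ng" "p + q = k" and Tk: "?T k = (fst LL0 * \<tau> ^ p, \<lambda>i. snd LL0 i * \<tau> ^ q)"
      by auto
    have nak: "\<not> accepted m f gf g gg P1 P2 c xt \<xi> (?T k)" using na Suc.prems by auto
    define A where "A = fst LL0 * \<tau> ^ p"
    define W where "W = (\<lambda>i. snd LL0 i * \<tau> ^ q)"
    have tp: "1 \<le> \<tau> ^ n" for n using tau by simp
    have A1: "Lmin * \<tau> ^ p \<le> A" unfolding A_def using L0 tau by (intro mult_right_mono) auto
    have W1: "Lmin * \<tau> ^ q \<le> W i" if "i < m" for i unfolding W_def using L0(3)[OF that] tau by (intro mult_right_mono) auto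
    have Apos: "0 < A" using A1 Lmin tp[of p] by (smt (verit) mult_pos_pos zero_less_power)
    have Wpos: "0 < W i" if "i < m" for i using W1[OF that] Lmin tau by (smt (verit) mult_pos_pos zero_less_power)
    interpret S: subp m gf g gg P1 xt \<xi> A W
      using P1cvx P1cont Apos Wpos by unfold_locales auto
    define z where "z = sub_sol m gf g gg P1 xt \<xi> A W"
    have zs: "S.sol z" unfolding z_def by (rule S.sub_sol_sol(1)[OF xtf])
    have TkAW: "?T k = (A, W)" using Tk by (simp add: A_def W_def)
    have step: "?T (Suc k) = trial_step m f gf g gg P1 P2 c \<tau> xt \<xi> (A, W)" by (simp add: trials_Suc TkAW)
    show ?case
    proof (cases "feas m g z")
      case False
      have "q < Ng"
      proof (rule ccontr)
        assume "\<not> q < Ng"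
        then have "\<tau> ^ Ng \<le> \<tau> ^ q" using tau by (intro power_increasing) auto
        then have "Lg i \<le> W i" if "i < m" for i
          using Ng[OF that] W1[OF that] Lmin by (smt (verit) mult_left_mono)
        then have "feas m g z" by (intro S.acc_g[OF zs gd glip]) auto
        then show False using False by simp
      qed
      moreover have "?T (Suc k) = (A, \<lambda>i. \<tau> * W i)" using False unfolding step trial_step_def Let_def z_def by simp
      ultimately show ?thesis using pq by (intro exI[of _ p] exI[of _ "Suc q"]) (auto simp: A_def W_def algebra_simps)
    next
      case True
      then have nd: "\<not> Fval f P1 P2 z \<le> Fval f P1 P2 xt - c / 2 * (norm (z - xt))\<^sup>2"
        using nak unfolding TkAW accepted_def Let_def z_def by auto
      have "p < Nf"
      proof (rule ccontr)
        assume "\<not> p < Nf"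
        then have "\<tau> ^ Nf \<le> \<tau> ^ p" using tau by (intro power_increasing) auto
        then have "Lf + c \<le> A" using Nf A1 Lmin by (smt (verit) mult_left_mono)
        then have "Fval f P1 P2 z \<le> Fval f P1 P2 xt - c / 2 * (norm (z - xt))\<^sup>2"
          using S.acc_f[OF zs xtf fd lip xi c] by simp
        then show False using nd by simp
      qed
      moreover have "?T (Suc k) = (\<tau> * A, W)" using True nd unfolding step trial_step_def Let_def z_def by simp
      ultimately show ?thesis using pq by (intro exI[of _ "Suc p"] exI[of _ q]) (auto simp: A_def W_def algebra_simps)
    qed
  qed
  obtain p q where "p \<le> Nf" "q \<le> Ng" "p + q = Nf + Ng + 1" using inv[of "Nf + Ng + 1"] by auto
  then show False by simp
qed




theorem mainTheorem1:
  fixes m :: nat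
    and f P1 P2 :: "'a::euclidean_space \<Rightarrow> real"
    and gf :: "'a \<Rightarrow> 'a"
    and g :: "nat \<Rightarrow> 'a \<Rightarrow> real"
    and gg :: "nat \<Rightarrow> 'a \<Rightarrow> 'a"
    and Lf c Lmin Lmax \<tau> :: real
    and x0 :: 'a
    and xisel :: "nat \<Rightarrow> 'a \<Rightarrow> 'a"
    and Lf0 :: "nat \<Rightarrow> real"
    and Lg0 :: "nat \<Rightarrow> nat \<Rightarrow> real"
    and X :: "nat \<Rightarrow> 'a"
    and LT :: "nat \<Rightarrow> nat \<Rightarrow> real \<times> (nat \<Rightarrow> real)"
    and K :: "nat \<Rightarrow> nat"
    and Z :: "nat \<Rightarrow> nat \<Rightarrow> 'a"
  assumes f_grad: "\<And>x. (f has_derivative (\<lambda>h. gf x \<bullet> h)) (at x)"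
    and P1_convex: "convex_on UNIV P1" and P1_cont: "continuous_on UNIV P1"
    and P2_convex: "convex_on UNIV P2" and P2_cont: "continuous_on UNIV P2"
    and g_cont: "\<And>i. i < m \<Longrightarrow> continuous_on UNIV (g i)"
    and feas_nonempty: "\<exists>x. feas m g x"
    \<comment> \<open>Assumption A\<close>
    and A1: "Lf-lipschitz_on UNIV gf"
    and A2_deriv: "\<And>i x. i < m \<Longrightarrow> (g i has_derivative (\<lambda>h. gg i x \<bullet> h)) (at x)"
    and A2_lip: "\<And>i. i < m \<Longrightarrow> \<exists>L. L-lipschitz_on UNIV (gg i)"
    and A3: "\<And>\<alpha>. bounded {x. feas m g x \<and> Fval f P1 P2 x \<le> \<alpha>}"
    \<comment> \<open>Assumption B (MFCQ)\<close>
    and B: "\<And>x. feas m g x \<Longrightarrow> \<exists>d. \<forall>i<m. g i x = 0 \<longrightarrow> gg i x \<bullet> d < 0"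
    \<comment> \<open>algorithm parameters and choices\<close>
    and c_pos: "c > 0" and Lmin_pos: "0 < Lmin" and Lmin_Lmax: "Lmin < Lmax" and tau: "\<tau> > 1"
    and x0_feas: "feas m g x0"
    and xisel: "\<And>t x. xisel t x \<in> subgrad P2 x"
    and Lf0: "\<And>t. Lmin \<le> Lf0 t \<and> Lf0 t \<le> Lmax"
    and Lg0: "\<And>t i. i < m \<Longrightarrow> Lmin \<le> Lg0 t i \<and> Lg0 t i \<le> Lmax"
  defines "X \<equiv> scp_x m f gf g gg P1 P2 c \<tau> x0 xisel Lf0 Lg0"
    and "LT \<equiv> (\<lambda>t k. trials m f gf g gg P1 P2 c \<tau> (X t) (xisel t (X t)) (Lf0 t, Lg0 t) k)"
    and "K \<equiv> (\<lambda>t. acc_index m f gf g gg P1 P2 c \<tau> (X t) (xisel t (X t)) (Lf0 t, Lg0 t))"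
    and "Z \<equiv> (\<lambda>t k. sub_sol m gf g gg P1 (X t) (xisel t (X t)) (fst (LT t k)) (snd (LT t k)))"
  shows
    \<comment> \<open>(i)\<close>
    "(\<forall>t. \<forall>k\<le>K t. \<exists>!z. is_sub_sol m gf g gg P1 (X t) (xisel t (X t)) (fst (LT t k)) (snd (LT t k)) z)
     \<and> (\<exists>k0::nat. k0 \<ge> 1 \<and> (\<forall>t. (\<exists>k<k0. accepted m f gf g gg P1 P2 c (X t) (xisel t (X t)) (LT t k))
                                 \<and> feas m g (X (Suc t))))
     \<comment> \<open>(ii)\<close>
     \<and> (\<exists>B. \<forall>t. \<bar>fst (LT t (K t))\<bar> \<le> B \<and> (\<forall>i<m. \<bar>snd (LT t (K t)) i\<bar> \<le> B))
     \<comment> \<open>(iii)\<close>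
     \<and> (\<forall>t. \<forall>k\<le>K t. \<forall>i<m.
          (norm (gg i (X t) /\<^sub>R snd (LT t k) i))\<^sup>2 - 2 / snd (LT t k) i * g i (X t) > 0)
     \<comment> \<open>(iv)\<close>
     \<and> (\<forall>t. \<forall>k\<le>K t. \<exists>lam :: nat \<Rightarrow> real.
          (\<forall>i<m. lam i \<ge> 0)
          \<and> (\<forall>x. sub_obj gf P1 (X t) (xisel t (X t)) (fst (LT t k)) (Z t k)
                   + (\<Sum>i<m. lam i * Gbar g gg (Z t k) (X t) (snd (LT t k)) i)
                 \<le> sub_obj gf P1 (X t) (xisel t (X t)) (fst (LT t k)) x
                   + (\<Sum>i<m. lam i * Gbar g gg x (X t) (snd (LT t k)) i))
          \<and> (\<forall>i<m. lam i * (g i (X t) + gg i (X t) \<bullet> (Z t k - X t)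
                         + snd (LT t k) i / 2 * (norm (Z t k - X t))\<^sup>2) = 0)
          \<and> (let Lfg = fst (LT t k) + (\<Sum>i<m. lam i * snd (LT t k) i) in
              0 \<in> (\<lambda>v. gf (X t) - xisel t (X t) + Lfg *\<^sub>R (Z t k - X t) + v
                        + (\<Sum>i<m. lam i *\<^sub>R gg i (X t))) ` subgrad P1 (Z t k)
              \<and> (feas m g (Z t k) \<longrightarrow>
                  (\<forall>x. Fval f P1 P2 (Z t k)
                       \<le> f (X t) + (gf (X t) - xisel t (X t)) \<bullet> (x - X t)
                         + Lfg / 2 * (norm (x - X t))\<^sup>2 + P1 x - P2 (X t)
                         + (\<Sum>i<m. lam i * (g i (X t) + gg i (X t) \<bullet> (x - X t)))
                         - Lfg / 2 * (norm (x - Z t k))\<^sup>2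
                         - (fst (LT t k) - Lf) / 2 * (norm (Z t k - X t))\<^sup>2))))"
proof -
  note defs = assms(21-24)
  have LTe: "LT t k = trials m f gf g gg P1 P2 c \<tau> (X t) (xisel t (X t)) (Lf0 t, Lg0 t) k" for t k
    using defs by simp
  have Ke: "K t = (LEAST k. accepted m f gf g gg P1 P2 c (X t) (xisel t (X t)) (LT t k))" for t
    using defs by (simp add: acc_index_def)
  have Ze: "Z t k = sub_sol m gf g gg P1 (X t) (xisel t (X t)) (fst (LT t k)) (snd (LT t k))" for t k
    using defs by simp
  have X0: "X 0 = x0" using defs by simp
  have XS: "X (Suc t) = Z t (K t)" for t
    using defs by (simp add: Let_def)
  have "\<forall>i. \<exists>L. i < m \<longrightarrow> L-lipschitz_on UNIV (gg i)" using A2_lip by metis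
  then obtain Lg where glip: "\<And>i. i < m \<Longrightarrow> (Lg i)-lipschitz_on UNIV (gg i)" by metis
  obtain Ng where Ng0: "(\<Sum>i<m. \<bar>Lg i\<bar>) / Lmin < \<tau> ^ Ng" using real_arch_pow[OF tau] by blast
  obtain Nf where Nf0: "(Lf + c) / Lmin < \<tau> ^ Nf" using real_arch_pow[OF tau] by blast
  have Ng: "Lg i \<le> Lmin * \<tau> ^ Ng" if i: "i < m" for i
  proof -
    have "Lg i \<le> \<bar>Lg i\<bar>" by simp
    also have "\<dots> \<le> (\<Sum>i<m. \<bar>Lg i\<bar>)" using i by (intro member_le_sum) auto
    also have "\<dots> < Lmin * \<tau> ^ Ng" using Ng0 Lmin_pos by (simp add: pos_divide_less_eq mult.commute)
    finally show ?thesis by simp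
  qed
  have Nf: "Lf + c \<le> Lmin * \<tau> ^ Nf" using Nf0 Lmin_pos by (simp add: pos_divide_less_eq mult.commute)
  define k0 where "k0 = Nf + Ng + 1"
  have xtf_of: "\<And>i. i < m \<Longrightarrow> g i x \<le> 0" if "feas m g x" for x using that by (simp add: feas_def)
  have L0: "Lmin \<le> fst (Lf0 t, Lg0 t)" "fst (Lf0 t, Lg0 t) \<le> Lmax"
    "\<And>i. i < m \<Longrightarrow> Lmin \<le> snd (Lf0 t, Lg0 t) i \<and> snd (Lf0 t, Lg0 t) i \<le> Lmax" for t
    using Lf0[of t] Lg0[of _ t] by auto
  have acc: "\<exists>k<k0. accepted m f gf g gg P1 P2 c (X t) (xisel t (X t)) (LT t k)" if "feas m g (X t)" for t
    unfolding LTe k0_def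
    by (rule trials_accept[OF P1_convex P1_cont f_grad A1 A2_deriv glip xtf_of[OF that] xisel c_pos tau Lmin_pos L0 Nf Ng])
  have accK: "accepted m f gf g gg P1 P2 c (X t) (xisel t (X t)) (LT t (K t)) \<and> K t < k0" if Ft: "feas m g (X t)" for t
  proof -
    obtain k where k: "k < k0" "accepted m f gf g gg P1 P2 c (X t) (xisel t (X t)) (LT t k)" using acc[OF Ft] by blast
    have "accepted m f gf g gg P1 P2 c (X t) (xisel t (X t)) (LT t (K t))" unfolding Ke by (rule LeastI[of _ k]) (rule k(2))
    moreover have "K t \<le> k" unfolding Ke by (rule Least_le) (rule k(2))
    ultimately show ?thesis using k(1) by simp
  qed
  have feasX: "feas m g (X t)" for t
  proof (induction t)
    case 0 then show ?case using x0_feas X0 by simp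
  next
    case (Suc t)
    have "accepted m f gf g gg P1 P2 c (X t) (xisel t (X t)) (LT t (K t))" using accK[OF Suc.IH] by blast
    then show ?case unfolding accepted_def Let_def XS Ze by simp
  qed
  have Kk0: "K t < k0" for t using accK[OF feasX] by blast
  have bnds: "Lmin \<le> fst (LT t k) \<and> fst (LT t k) \<le> Lmax * \<tau> ^ k
     \<and> (\<forall>i<m. Lmin \<le> snd (LT t k) i \<and> snd (LT t k) i \<le> Lmax * \<tau> ^ k)" for t k
    unfolding LTe by (rule trials_bounds[OF tau Lmin_pos L0])
  have mfcq: "\<exists>d. \<forall>i<m. g i (X t) = 0 \<longrightarrow> gg i (X t) \<bullet> d < 0" for t using B[OF feasX] .
  have loc: "subp m P1 (fst (LT t k)) (snd (LT t k))" for t k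
    using P1_convex P1_cont bnds[of t k] Lmin_pos by unfold_locales auto
  have part_i1: "\<forall>t. \<forall>k\<le>K t. \<exists>!z. is_sub_sol m gf g gg P1 (X t) (xisel t (X t)) (fst (LT t k)) (snd (LT t k)) z"
  proof (intro allI impI)
    fix t k
    interpret S: subp m gf g gg P1 "X t" "xisel t (X t)" "fst (LT t k)" "snd (LT t k)" by (rule loc)
    show "\<exists>!z. is_sub_sol m gf g gg P1 (X t) (xisel t (X t)) (fst (LT t k)) (snd (LT t k)) z"
      by (rule S.sub_sol_sol(2)[OF xtf_of[OF feasX[of t]]])
  qed
  have part_i2: "\<exists>k0::nat. k0 \<ge> 1 \<and> (\<forall>t. (\<exists>k<k0. accepted m f gf g gg P1 P2 c (X t) (xisel t (X t)) (LT t k))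
                                 \<and> feas m g (X (Suc t)))"
    using acc[OF feasX] feasX by (intro exI[of _ k0]) (auto simp: k0_def)
  have part_ii: "\<exists>B. \<forall>t. \<bar>fst (LT t (K t))\<bar> \<le> B \<and> (\<forall>i<m. \<bar>snd (LT t (K t)) i\<bar> \<le> B)"
  proof (intro exI[of _ "Lmax * \<tau> ^ k0"] allI conjI impI)
    fix t
    have Lmax0: "0 \<le> Lmax" using Lmin_pos Lmin_Lmax by simp
    have pw: "Lmax * \<tau> ^ K t \<le> Lmax * \<tau> ^ k0" using Kk0[of t] tau Lmax0
      by (intro mult_left_mono power_increasing) auto
    show "\<bar>fst (LT t (K t))\<bar> \<le> Lmax * \<tau> ^ k0" using bnds[of t "K t"] pw Lmin_pos by auto
    fix i assume "i < m"
    then show "\<bar>snd (LT t (K t)) i\<bar> \<le> Lmax * \<tau> ^ k0" using bnds[of t "K t"] pw Lmin_pos by fastforce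
  qed
  have part_iii: "\<forall>t. \<forall>k\<le>K t. \<forall>i<m.
          (norm (gg i (X t) /\<^sub>R snd (LT t k) i))\<^sup>2 - 2 / snd (LT t k) i * g i (X t) > 0"
  proof (intro allI impI)
    fix t k i assume "k \<le> K t" and i: "i < m"
    have wpos: "0 < (snd (LT t k) i)" using bnds[of t k] i Lmin_pos by fastforce
    have gle: "g i (X t) \<le> 0" using feasX[of t] i by (simp add: feas_def)
    show "(norm (gg i (X t) /\<^sub>R snd (LT t k) i))\<^sup>2 - 2 / snd (LT t k) i * g i (X t) > 0"
      
    proof (cases "g i (X t) = 0")
      case True
      obtain d where "\<forall>i<m. g i (X t) = 0 \<longrightarrow> gg i (X t) \<bullet> d < 0" using mfcq by blast
      then have gn: "gg i (X t) \<noteq> 0" using True i by fastforce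
      have "norm (gg i (X t) /\<^sub>R (snd (LT t k) i)) = norm (gg i (X t)) / (snd (LT t k) i)" using wpos by (simp add: divide_inverse mult.commute)
      then have "0 < norm (gg i (X t) /\<^sub>R (snd (LT t k) i))" using gn wpos by simp
      then have "0 < (norm (gg i (X t) /\<^sub>R (snd (LT t k) i)))\<^sup>2" by (rule zero_less_power)
      moreover have "2 / (snd (LT t k) i) * g i (X t) = 0" using True by simp
      ultimately show ?thesis by linarith
    next
      case False
      then have "g i (X t) < 0" using gle by simp
      then have "0 < - (2 / (snd (LT t k) i) * g i (X t))" using wpos by (simp add: divide_neg_pos)
      moreover have "0 \<le> (norm (gg i (X t) /\<^sub>R (snd (LT t k) i)))\<^sup>2" by simp
      ultimately show ?thesis by linarith
    qed
  qed
  have part_iv: "\<forall>t. \<forall>k\<le>K t. \<exists>lam :: nat \<Rightarrow> real.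
          (\<forall>i<m. lam i \<ge> 0)
          \<and> (\<forall>x. sub_obj gf P1 (X t) (xisel t (X t)) (fst (LT t k)) (Z t k)
                   + (\<Sum>i<m. lam i * Gbar g gg (Z t k) (X t) (snd (LT t k)) i)
                 \<le> sub_obj gf P1 (X t) (xisel t (X t)) (fst (LT t k)) x
                   + (\<Sum>i<m. lam i * Gbar g gg x (X t) (snd (LT t k)) i))
          \<and> (\<forall>i<m. lam i * (g i (X t) + gg i (X t) \<bullet> (Z t k - X t)
                         + snd (LT t k) i / 2 * (norm (Z t k - X t))\<^sup>2) = 0)
          \<and> (let Lfg = fst (LT t k) + (\<Sum>i<m. lam i * snd (LT t k) i) in
              0 \<in> (\<lambda>v. gf (X t) - xisel t (X t) + Lfg *\<^sub>R (Z t k - X t) + v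
                        + (\<Sum>i<m. lam i *\<^sub>R gg i (X t))) ` subgrad P1 (Z t k)
              \<and> (feas m g (Z t k) \<longrightarrow>
                  (\<forall>x. Fval f P1 P2 (Z t k)
                       \<le> f (X t) + (gf (X t) - xisel t (X t)) \<bullet> (x - X t)
                         + Lfg / 2 * (norm (x - X t))\<^sup>2 + P1 x - P2 (X t)
                         + (\<Sum>i<m. lam i * (g i (X t) + gg i (X t) \<bullet> (x - X t)))
                         - Lfg / 2 * (norm (x - Z t k))\<^sup>2
                         - (fst (LT t k) - Lf) / 2 * (norm (Z t k - X t))\<^sup>2)))"
  proof (intro allI impI)
    fix t k assume "k \<le> K t"
    interpret S: subp m gf g gg P1 "X t" "xisel t (X t)" "fst (LT t k)" "snd (LT t k)" by (rule loc)
    have zs: "S.sol (Z t k)" unfolding Ze by (rule S.sub_sol_sol(1)[OF xtf_of[OF feasX]])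
    obtain d where d: "\<forall>i<m. g i (X t) = 0 \<longrightarrow> gg i (X t) \<bullet> d < 0" using mfcq by blast
    obtain xh where xh: "\<forall>i<m. Gbar g gg xh (X t) (snd (LT t k)) i < 0"
      using S.slater_exists[OF xtf_of[OF feasX]] d by blast
    show "\<exists>lam :: nat \<Rightarrow> real.
          (\<forall>i<m. lam i \<ge> 0)
          \<and> (\<forall>x. sub_obj gf P1 (X t) (xisel t (X t)) (fst (LT t k)) (Z t k)
                   + (\<Sum>i<m. lam i * Gbar g gg (Z t k) (X t) (snd (LT t k)) i)
                 \<le> sub_obj gf P1 (X t) (xisel t (X t)) (fst (LT t k)) x
                   + (\<Sum>i<m. lam i * Gbar g gg x (X t) (snd (LT t k)) i))
          \<and> (\<forall>i<m. lam i * (g i (X t) + gg i (X t) \<bullet> (Z t k - X t)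
                         + snd (LT t k) i / 2 * (norm (Z t k - X t))\<^sup>2) = 0)
          \<and> (let Lfg = fst (LT t k) + (\<Sum>i<m. lam i * snd (LT t k) i) in
              0 \<in> (\<lambda>v. gf (X t) - xisel t (X t) + Lfg *\<^sub>R (Z t k - X t) + v
                        + (\<Sum>i<m. lam i *\<^sub>R gg i (X t))) ` subgrad P1 (Z t k)
              \<and> (feas m g (Z t k) \<longrightarrow>
                  (\<forall>x. Fval f P1 P2 (Z t k)
                       \<le> f (X t) + (gf (X t) - xisel t (X t)) \<bullet> (x - X t)
                         + Lfg / 2 * (norm (x - X t))\<^sup>2 + P1 x - P2 (X t)
                         + (\<Sum>i<m. lam i * (g i (X t) + gg i (X t) \<bullet> (x - X t)))
                         - Lfg / 2 * (norm (x - Z t k))\<^sup>2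
                         - (fst (LT t k) - Lf) / 2 * (norm (Z t k - X t))\<^sup>2)))"
      by (rule S.iv_part[OF zs _ f_grad A1 xisel]) (use xh in auto)
  qed
  show ?thesis using part_i1 part_i2 part_ii part_iii part_iv by blast
qed



end
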